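(* Every two-qubit quantum computation $U\in U(4)$ can be realized exactly, up to a global phase, by a circuit of at most $23$ elementary gates, of which at most $4$ are CNOT gates; that is, there exist $c\in\mathbb{C}$ with $|c|=1$ and elementary gates $G_1,\dots,G_m$ with $m\le 23$, at most $4$ of them CNOTs, such that $U=c\,G_m G_{m-1}\cdots G_1$. No ancilla qubits are used.
   Context: Two-qubit computations are $4\times4$ unitary matrices acting on $\mathbb{C}^2\otimes\mathbb{C}^2$ with computational basis $|00\rangle,|01\rangle,|10\rangle,|11\rangle$ in this order. The elementary gates are the $4\times 4$ matrices of the following forms: $R_y(\theta)\otimes \mathbf{1}$ or $\mathbf{1}\otimes R_y(\theta)$, where $R_y(\theta)=\begin{pmatrix}\cos\theta/2 & \sin\theta/2\\ -\sin\theta/2 & \cos\theta/2\end{pmatrix}$, $0\le\theta<2\pi$; $R_z(\alpha)\otimes\mathbf{1}$ or $\mathbf{1}\otimes R_z(\alpha)$, where $R_z(\alpha)=\mathrm{diag}(e^{-i\alpha/2},e^{i\alpha/2})$, $0\le\alpha<2\pi$; and the two CNOT gates, namely the permutation matrix swapping $|10\rangle\leftrightarrow|11\rangle$ and the permutation matrix swapping $|01\rangle\leftrightarrow|11\rangle$ (each fixing the other basis vectors). A circuit computes the product of its gate matrices. *)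

theory Defs
  imports Complex_Main "Jordan_Normal_Form.Matrix"
begin

text \<open>Two-qubit matrices are 4x4 complex matrices (Jordan_Normal_Form type complex mat),
  indexed 0..3 corresponding to the basis 00, 01, 10, 11 in this order.
  Index 2*a+b corresponds to the basis vector with first qubit a and second qubit b.\<close>

definition conj_transpose :: "complex mat \<Rightarrow> complex mat" where
  "conj_transpose A = mat (dim_col A) (dim_row A) (\<lambda>(i,j). cnj (A $$ (j,i)))"

definition unitary4 :: "complex mat \<Rightarrow> bool" where
  "unitary4 U \<longleftrightarrow> U \<in> carrier_mat 4 4 \<and> U * conj_transpose U = 1\<^sub>m 4"

definition Ry :: "real \<Rightarrow> complex mat" where
  "Ry \<theta> = mat_of_rows_list 2
     [[complex_of_real (cos (\<theta>/2)), complex_of_real (sin (\<theta>/2))],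
      [complex_of_real (- sin (\<theta>/2)), complex_of_real (cos (\<theta>/2))]]"

definition Rz :: "real \<Rightarrow> complex mat" where
  "Rz \<alpha> = mat_of_rows_list 2
     [[exp (- \<i> * complex_of_real (\<alpha>/2)), 0],
      [0, exp (\<i> * complex_of_real (\<alpha>/2))]]"

definition id2 :: "complex mat" where "id2 = 1\<^sub>m 2"

definition kron2 :: "complex mat \<Rightarrow> complex mat \<Rightarrow> complex mat" where
  "kron2 A B = mat 4 4 (\<lambda>(i,j). A $$ (i div 2, j div 2) * B $$ (i mod 2, j mod 2))"

definition perm4 :: "(nat \<Rightarrow> nat) \<Rightarrow> complex mat" where
  "perm4 p = mat 4 4 (\<lambda>(i,j). if i = p j then 1 else 0)"

text \<open>CNOT swapping |10> (index 2) and |11> (index 3).\<close>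
definition CNOT1 :: "complex mat" where
  "CNOT1 = perm4 (Fun.swap 2 3 id)"

text \<open>CNOT swapping |01> (index 1) and |11> (index 3).\<close>
definition CNOT2 :: "complex mat" where
  "CNOT2 = perm4 (Fun.swap 1 3 id)"

definition cnot_gates :: "complex mat set" where
  "cnot_gates = {CNOT1, CNOT2}"

definition elementary_gates :: "complex mat set" where
  "elementary_gates =
     {kron2 (Ry \<theta>) id2 | \<theta>. 0 \<le> \<theta> \<and> \<theta> < 2*pi} \<union>
     {kron2 id2 (Ry \<theta>) | \<theta>. 0 \<le> \<theta> \<and> \<theta> < 2*pi} \<union>
     {kron2 (Rz \<alpha>) id2 | \<alpha>. 0 \<le> \<alpha> \<and> \<alpha> < 2*pi} \<union>
     {kron2 id2 (Rz \<alpha>) | \<alpha>. 0 \<le> \<alpha> \<and> \<alpha> < 2*pi} \<union>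
     cnot_gates"

text \<open>The circuit [G1, ..., Gm] computes G_m * ... * G_1.\<close>
definition circuit_matrix :: "complex mat list \<Rightarrow> complex mat" where
  "circuit_matrix gs = foldl (\<lambda>acc g. g * acc) (1\<^sub>m 4) gs"

end

theory Submission
  imports Defs "Jordan_Normal_Form.Spectral_Radius"
begin

lemma less4: "(i::nat) < 4 \<longleftrightarrow> i = 0 \<or> i = 1 \<or> i = 2 \<or> i = 3" by auto
lemma less2: "(i::nat) < 2 \<longleftrightarrow> i = 0 \<or> i = 1" by auto

definition m2 :: "complex \<Rightarrow> complex \<Rightarrow> complex \<Rightarrow> complex \<Rightarrow> complex mat" where
  "m2 a00 a01 a10 a11 = mat 2 2 (\<lambda>(i,j). [[a00,a01],[a10,a11]] ! i ! j)"

lemma m2_carrier[simp]: "m2 a00 a01 a10 a11 \<in> carrier_mat 2 2" "dim_row (m2 a00 a01 a10 a11) = 2" "dim_col (m2 a00 a01 a10 a11) = 2"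
  by (simp_all add: m2_def)

lemma m2_index[simp]:
  "m2 a00 a01 a10 a11 $$ (0,0) = a00"
  "m2 a00 a01 a10 a11 $$ (0,1) = a01"
  "m2 a00 a01 a10 a11 $$ (1,0) = a10"
  "m2 a00 a01 a10 a11 $$ (1,1) = a11"
  by (simp_all add: m2_def)

lemma m2_index_Suc[simp]:
  "m2 a00 a01 a10 a11 $$ (0,Suc 0) = a01"
  "m2 a00 a01 a10 a11 $$ (Suc 0,0) = a10"
  "m2 a00 a01 a10 a11 $$ (Suc 0,Suc 0) = a11"
  by (simp_all add: m2_def)

lemma m2_eq_iff: "(m2 a00 a01 a10 a11 = m2 b00 b01 b10 b11) \<longleftrightarrow> (a00 = b00 \<and> a01 = b01 \<and> a10 = b10 \<and> a11 = b11)"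
  (is "?l \<longleftrightarrow> ?r")
proof
  assume ?l thus ?r by (metis m2_index)
next
  assume ?r thus ?l by simp
qed

lemma m2_mult: "m2 a00 a01 a10 a11 * m2 b00 b01 b10 b11 = m2 (a00 * b00 + a01 * b10) (a00 * b01 + a01 * b11) (a10 * b00 + a11 * b10) (a10 * b01 + a11 * b11)"
  by (rule eq_matI) (auto simp: m2_def scalar_prod_def less_Suc_eq numeral_eq_Suc sum.atLeast0_lessThan_Suc)

lemma m2_smult: "c \<cdot>\<^sub>m m2 a00 a01 a10 a11 = m2 (c * a00) (c * a01) (c * a10) (c * a11)"
  by (rule eq_matI) (auto simp: m2_def less_Suc_eq numeral_eq_Suc)

lemma m2_ct: "conj_transpose (m2 a00 a01 a10 a11) = m2 (cnj a00) (cnj a10) (cnj a01) (cnj a11)"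
  by (rule eq_matI) (auto simp: m2_def conj_transpose_def less_Suc_eq numeral_eq_Suc)

lemma m2_tr: "transpose_mat (m2 a00 a01 a10 a11) = m2 a00 a10 a01 a11"
  by (rule eq_matI) (auto simp: m2_def less_Suc_eq numeral_eq_Suc)

lemma m2_one: "1\<^sub>m 2 = m2 1 0 0 1"
  by (rule eq_matI) (auto simp: m2_def less_Suc_eq numeral_eq_Suc)

lemma m2_expand: "A \<in> carrier_mat 2 2 \<Longrightarrow> A = m2 (A $$ (0,0)) (A $$ (0,1)) (A $$ (1,0)) (A $$ (1,1))"
  by (rule eq_matI) (auto simp: m2_def less_Suc_eq numeral_eq_Suc)

definition m4 :: "complex \<Rightarrow> complex \<Rightarrow> complex \<Rightarrow> complex \<Rightarrow> complex \<Rightarrow> complex \<Rightarrow> complex \<Rightarrow> complex \<Rightarrow> complex \<Rightarrow> complex \<Rightarrow> complex \<Rightarrow> complex \<Rightarrow> complex \<Rightarrow> complex \<Rightarrow> complex \<Rightarrow> complex \<Rightarrow> complex mat" where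
  "m4 a00 a01 a02 a03 a10 a11 a12 a13 a20 a21 a22 a23 a30 a31 a32 a33 = mat 4 4 (\<lambda>(i,j). [[a00,a01,a02,a03],[a10,a11,a12,a13],[a20,a21,a22,a23],[a30,a31,a32,a33]] ! i ! j)"

lemma m4_carrier[simp]: "m4 a00 a01 a02 a03 a10 a11 a12 a13 a20 a21 a22 a23 a30 a31 a32 a33 \<in> carrier_mat 4 4" "dim_row (m4 a00 a01 a02 a03 a10 a11 a12 a13 a20 a21 a22 a23 a30 a31 a32 a33) = 4" "dim_col (m4 a00 a01 a02 a03 a10 a11 a12 a13 a20 a21 a22 a23 a30 a31 a32 a33) = 4"
  by (simp_all add: m4_def)

lemma m4_index[simp]:
  "m4 a00 a01 a02 a03 a10 a11 a12 a13 a20 a21 a22 a23 a30 a31 a32 a33 $$ (0,0) = a00"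
  "m4 a00 a01 a02 a03 a10 a11 a12 a13 a20 a21 a22 a23 a30 a31 a32 a33 $$ (0,1) = a01"
  "m4 a00 a01 a02 a03 a10 a11 a12 a13 a20 a21 a22 a23 a30 a31 a32 a33 $$ (0,2) = a02"
  "m4 a00 a01 a02 a03 a10 a11 a12 a13 a20 a21 a22 a23 a30 a31 a32 a33 $$ (0,3) = a03"
  "m4 a00 a01 a02 a03 a10 a11 a12 a13 a20 a21 a22 a23 a30 a31 a32 a33 $$ (1,0) = a10"
  "m4 a00 a01 a02 a03 a10 a11 a12 a13 a20 a21 a22 a23 a30 a31 a32 a33 $$ (1,1) = a11"
  "m4 a00 a01 a02 a03 a10 a11 a12 a13 a20 a21 a22 a23 a30 a31 a32 a33 $$ (1,2) = a12"
  "m4 a00 a01 a02 a03 a10 a11 a12 a13 a20 a21 a22 a23 a30 a31 a32 a33 $$ (1,3) = a13"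
  "m4 a00 a01 a02 a03 a10 a11 a12 a13 a20 a21 a22 a23 a30 a31 a32 a33 $$ (2,0) = a20"
  "m4 a00 a01 a02 a03 a10 a11 a12 a13 a20 a21 a22 a23 a30 a31 a32 a33 $$ (2,1) = a21"
  "m4 a00 a01 a02 a03 a10 a11 a12 a13 a20 a21 a22 a23 a30 a31 a32 a33 $$ (2,2) = a22"
  "m4 a00 a01 a02 a03 a10 a11 a12 a13 a20 a21 a22 a23 a30 a31 a32 a33 $$ (2,3) = a23"
  "m4 a00 a01 a02 a03 a10 a11 a12 a13 a20 a21 a22 a23 a30 a31 a32 a33 $$ (3,0) = a30"
  "m4 a00 a01 a02 a03 a10 a11 a12 a13 a20 a21 a22 a23 a30 a31 a32 a33 $$ (3,1) = a31"
  "m4 a00 a01 a02 a03 a10 a11 a12 a13 a20 a21 a22 a23 a30 a31 a32 a33 $$ (3,2) = a32"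
  "m4 a00 a01 a02 a03 a10 a11 a12 a13 a20 a21 a22 a23 a30 a31 a32 a33 $$ (3,3) = a33"
  by (simp_all add: m4_def)

lemma m4_index_Suc[simp]:
  "m4 a00 a01 a02 a03 a10 a11 a12 a13 a20 a21 a22 a23 a30 a31 a32 a33 $$ (0,Suc 0) = a01"
  "m4 a00 a01 a02 a03 a10 a11 a12 a13 a20 a21 a22 a23 a30 a31 a32 a33 $$ (Suc 0,0) = a10"
  "m4 a00 a01 a02 a03 a10 a11 a12 a13 a20 a21 a22 a23 a30 a31 a32 a33 $$ (Suc 0,Suc 0) = a11"
  "m4 a00 a01 a02 a03 a10 a11 a12 a13 a20 a21 a22 a23 a30 a31 a32 a33 $$ (Suc 0,2) = a12"
  "m4 a00 a01 a02 a03 a10 a11 a12 a13 a20 a21 a22 a23 a30 a31 a32 a33 $$ (Suc 0,3) = a13"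
  "m4 a00 a01 a02 a03 a10 a11 a12 a13 a20 a21 a22 a23 a30 a31 a32 a33 $$ (2,Suc 0) = a21"
  "m4 a00 a01 a02 a03 a10 a11 a12 a13 a20 a21 a22 a23 a30 a31 a32 a33 $$ (3,Suc 0) = a31"
  by (simp_all add: m4_def)

lemma m4_eq_iff: "(m4 a00 a01 a02 a03 a10 a11 a12 a13 a20 a21 a22 a23 a30 a31 a32 a33 = m4 b00 b01 b02 b03 b10 b11 b12 b13 b20 b21 b22 b23 b30 b31 b32 b33) \<longleftrightarrow> (a00 = b00 \<and> a01 = b01 \<and> a02 = b02 \<and> a03 = b03 \<and> a10 = b10 \<and> a11 = b11 \<and> a12 = b12 \<and> a13 = b13 \<and> a20 = b20 \<and> a21 = b21 \<and> a22 = b22 \<and> a23 = b23 \<and> a30 = b30 \<and> a31 = b31 \<and> a32 = b32 \<and> a33 = b33)"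
  (is "?l \<longleftrightarrow> ?r")
proof
  assume ?l thus ?r by (metis m4_index)
next
  assume ?r thus ?l by simp
qed

lemma m4_mult: "m4 a00 a01 a02 a03 a10 a11 a12 a13 a20 a21 a22 a23 a30 a31 a32 a33 * m4 b00 b01 b02 b03 b10 b11 b12 b13 b20 b21 b22 b23 b30 b31 b32 b33 = m4 (a00 * b00 + a01 * b10 + a02 * b20 + a03 * b30) (a00 * b01 + a01 * b11 + a02 * b21 + a03 * b31) (a00 * b02 + a01 * b12 + a02 * b22 + a03 * b32) (a00 * b03 + a01 * b13 + a02 * b23 + a03 * b33) (a10 * b00 + a11 * b10 + a12 * b20 + a13 * b30) (a10 * b01 + a11 * b11 + a12 * b21 + a13 * b31) (a10 * b02 + a11 * b12 + a12 * b22 + a13 * b32) (a10 * b03 + a11 * b13 + a12 * b23 + a13 * b33) (a20 * b00 + a21 * b10 + a22 * b20 + a23 * b30) (a20 * b01 + a21 * b11 + a22 * b21 + a23 * b31) (a20 * b02 + a21 * b12 + a22 * b22 + a23 * b32) (a20 * b03 + a21 * b13 + a22 * b23 + a23 * b33) (a30 * b00 + a31 * b10 + a32 * b20 + a33 * b30) (a30 * b01 + a31 * b11 + a32 * b21 + a33 * b31) (a30 * b02 + a31 * b12 + a32 * b22 + a33 * b32) (a30 * b03 + a31 * b13 + a32 * b23 + a33 * b33)"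
  by (rule eq_matI) (auto simp: m4_def scalar_prod_def less_Suc_eq numeral_eq_Suc sum.atLeast0_lessThan_Suc)

lemma m4_smult: "c \<cdot>\<^sub>m m4 a00 a01 a02 a03 a10 a11 a12 a13 a20 a21 a22 a23 a30 a31 a32 a33 = m4 (c * a00) (c * a01) (c * a02) (c * a03) (c * a10) (c * a11) (c * a12) (c * a13) (c * a20) (c * a21) (c * a22) (c * a23) (c * a30) (c * a31) (c * a32) (c * a33)"
  by (rule eq_matI) (auto simp: m4_def less_Suc_eq numeral_eq_Suc)

lemma m4_ct: "conj_transpose (m4 a00 a01 a02 a03 a10 a11 a12 a13 a20 a21 a22 a23 a30 a31 a32 a33) = m4 (cnj a00) (cnj a10) (cnj a20) (cnj a30) (cnj a01) (cnj a11) (cnj a21) (cnj a31) (cnj a02) (cnj a12) (cnj a22) (cnj a32) (cnj a03) (cnj a13) (cnj a23) (cnj a33)"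
  by (rule eq_matI) (auto simp: m4_def conj_transpose_def less_Suc_eq numeral_eq_Suc)

lemma m4_tr: "transpose_mat (m4 a00 a01 a02 a03 a10 a11 a12 a13 a20 a21 a22 a23 a30 a31 a32 a33) = m4 a00 a10 a20 a30 a01 a11 a21 a31 a02 a12 a22 a32 a03 a13 a23 a33"
  by (rule eq_matI) (auto simp: m4_def less_Suc_eq numeral_eq_Suc)

lemma m4_one: "1\<^sub>m 4 = m4 1 0 0 0 0 1 0 0 0 0 1 0 0 0 0 1"
  by (rule eq_matI) (auto simp: m4_def less_Suc_eq numeral_eq_Suc)

lemma m4_expand: "A \<in> carrier_mat 4 4 \<Longrightarrow> A = m4 (A $$ (0,0)) (A $$ (0,1)) (A $$ (0,2)) (A $$ (0,3)) (A $$ (1,0)) (A $$ (1,1)) (A $$ (1,2)) (A $$ (1,3)) (A $$ (2,0)) (A $$ (2,1)) (A $$ (2,2)) (A $$ (2,3)) (A $$ (3,0)) (A $$ (3,1)) (A $$ (3,2)) (A $$ (3,3))"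
  by (rule eq_matI) (auto simp: m4_def less_Suc_eq numeral_eq_Suc)

lemma kron2_m2: "kron2 (m2 a00 a01 a10 a11) (m2 b00 b01 b10 b11) = m4 (a00 * b00) (a00 * b01) (a01 * b00) (a01 * b01) (a00 * b10) (a00 * b11) (a01 * b10) (a01 * b11) (a10 * b00) (a10 * b01) (a11 * b00) (a11 * b01) (a10 * b10) (a10 * b11) (a11 * b10) (a11 * b11)"
  by (rule eq_matI) (auto simp: kron2_def m4_def m2_def less4)

lemma Ry_m2: "Ry t = m2 (cos (t/2)) (sin (t/2)) (- sin (t/2)) (cos (t/2))"
  by (rule eq_matI) (auto simp: Ry_def m2_def mat_of_rows_list_def less2)

lemma Rz_m2: "Rz t = m2 (cis (-(t/2))) 0 0 (cis (t/2))"
proof -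
  have "exp (- \<i> * complex_of_real (t / 2)) = cis (-(t/2))" by (simp add: cis_conv_exp)
  moreover have "exp (\<i> * complex_of_real (t / 2)) = cis (t/2)" by (simp add: cis_conv_exp)
  ultimately show ?thesis
    by (intro eq_matI) (auto simp: Rz_def m2_def mat_of_rows_list_def less2)
qed

lemma id2_m2: "id2 = m2 1 0 0 1" by (simp add: id2_def m2_one)

lemma CNOT1_m4: "CNOT1 = m4 1 0 0 0  0 1 0 0  0 0 0 1  0 0 1 0"
  by (rule eq_matI) (auto simp: CNOT1_def perm4_def m4_def less4 Fun.swap_def)

lemma CNOT2_m4: "CNOT2 = m4 1 0 0 0  0 0 0 1  0 0 1 0  0 1 0 0"
  by (rule eq_matI) (auto simp: CNOT2_def perm4_def m4_def less4 Fun.swap_def)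

definition M0 :: "complex mat" where
  "M0 = m4 1 \<i> 0 0  0 0 \<i> 1  0 0 \<i> (-1)  1 (-\<i>) 0 0"

definition G01 :: "real \<Rightarrow> complex mat" where
  "G01 t = m4 (cos t) (- sin t) 0 0  (sin t) (cos t) 0 0  0 0 1 0  0 0 0 1"
definition G12 :: "real \<Rightarrow> complex mat" where
  "G12 t = m4 1 0 0 0  0 (cos t) (- sin t) 0  0 (sin t) (cos t) 0  0 0 0 1"
definition G23 :: "real \<Rightarrow> complex mat" where
  "G23 t = m4 1 0 0 0  0 1 0 0  0 0 (cos t) (- sin t)  0 0 (sin t) (cos t)"

lemma cis_half_sq: "cis (t/2) * cis (t/2) = cis t" "cis (-(t/2)) * cis (-(t/2)) = cis (-t)"
  by (simp_all add: cis_mult)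

lemma G01_loc: "(1/2) \<cdot>\<^sub>m (M0 * G01 t * conj_transpose M0) = kron2 (Rz (-t)) (Rz (-t))"
  unfolding M0_def G01_def Rz_m2 kron2_m2 m4_mult m4_ct m4_smult
  apply (simp add: m4_eq_iff cis_mult)
  apply (simp add: complex_eq_iff algebra_simps)
  done

lemma G12_loc: "(1/2) \<cdot>\<^sub>m (M0 * G12 (2*t) * conj_transpose M0) = kron2 (Ry (-2*t)) (Ry (-2*t))"
  unfolding M0_def G12_def Ry_m2 kron2_m2 m4_mult m4_ct m4_smult
  apply (simp add: m4_eq_iff cos_double sin_double)
  apply (simp add: complex_eq_iff algebra_simps power2_eq_square)
  done

lemma G23_loc: "(1/2) \<cdot>\<^sub>m (M0 * G23 t * conj_transpose M0) = kron2 (Rz t) (Rz (-t))"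
  unfolding M0_def G23_def Rz_m2 kron2_m2 m4_mult m4_ct m4_smult
  apply (simp add: m4_eq_iff cis_mult)
  apply (simp add: complex_eq_iff algebra_simps)
  done

definition sq2 :: complex where "sq2 = complex_of_real (sqrt 2 / 2)"
lemma sq2_sq: "sq2 * sq2 = 1/2" "sq2 * (sq2 * x) = x/2"
proof -
  have r: "sqrt 2 / 2 * (sqrt 2 / 2) = (1/2::real)" by simp
  have "complex_of_real (sqrt 2 / 2) * complex_of_real (sqrt 2 / 2) = complex_of_real (sqrt 2 / 2 * (sqrt 2 / 2))"
    by (rule of_real_mult[symmetric])
  also have "\<dots> = 1/2" unfolding r by simp
  finally show "sq2 * sq2 = 1/2" unfolding sq2_def .
  thus "sq2 * (sq2 * x) = x/2" by (metis mult.assoc mult.commute times_divide_eq_right mult_1)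
qed

lemma Ry_pi2: "Ry (pi/2) = m2 sq2 sq2 (-sq2) sq2" "Ry (-pi/2) = m2 sq2 (-sq2) sq2 sq2"
  by (simp_all add: Ry_m2 sq2_def cos_45 sin_45)

definition Dg :: "complex \<Rightarrow> complex \<Rightarrow> complex \<Rightarrow> complex \<Rightarrow> complex mat" where
  "Dg d0 d1 d2 d3 = m4 d0 0 0 0  0 d1 0 0  0 0 d2 0  0 0 0 d3"

definition Ccirc :: "real \<Rightarrow> real \<Rightarrow> real \<Rightarrow> complex mat" where
  "Ccirc a b c = CNOT1 * kron2 (Ry (pi/2) * Rz a) (Rz c) * CNOT1 * kron2 id2 (Rz b) * CNOT1 *
     kron2 (Ry (-pi/2)) id2 * CNOT1"

lemma Ccirc_diag: "Ccirc a b c = (1/2) \<cdot>\<^sub>m (M0 * Dg (cis ((a+b-c)/2)) (cis (-(a+b+c)/2)) (cis ((a-b+c)/2)) (cis ((-a+b+c)/2)) * conj_transpose M0)"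
  unfolding Ccirc_def M0_def Dg_def Rz_m2 Ry_pi2 id2_m2 CNOT1_m4 kron2_m2 m2_mult m4_mult m4_ct m4_smult
  apply (simp add: m4_eq_iff cis_mult sq2_sq algebra_simps)
  apply (simp add: diff_divide_distrib add_divide_distrib algebra_simps)
  done

lemma kron2_carrier[simp]: "kron2 A B \<in> carrier_mat 4 4"
  by (simp add: kron2_def)

lemma smult_smult_times: "a \<cdot>\<^sub>m (b \<cdot>\<^sub>m A) = (a * b :: complex) \<cdot>\<^sub>m A"
  by (rule eq_matI) auto

lemma elem_carrier: "g \<in> elementary_gates \<Longrightarrow> g \<in> carrier_mat 4 4"
  by (auto simp: elementary_gates_def cnot_gates_def CNOT1_m4 CNOT2_m4)

lemma foldl_circ: "set gs \<subseteq> elementary_gates \<Longrightarrow> A \<in> carrier_mat 4 4 \<Longrightarrow>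
  foldl (\<lambda>acc g. g * acc) A gs = foldl (\<lambda>acc g. g * acc) (1\<^sub>m 4) gs * A"
proof (induction gs arbitrary: A rule: rev_induct)
  case Nil thus ?case by simp
next
  case (snoc g gs)
  have g: "g \<in> carrier_mat 4 4" using snoc.prems elem_carrier by auto
  have f: "foldl (\<lambda>acc g. g * acc) (1\<^sub>m 4) gs \<in> carrier_mat 4 4"
  proof -
    have "\<And>B. B \<in> carrier_mat 4 4 \<Longrightarrow> set gs \<subseteq> elementary_gates \<Longrightarrow> foldl (\<lambda>acc g. g * acc) B gs \<in> carrier_mat 4 4"
    proof (induction gs rule: rev_induct)
      case Nil thus ?case by simp
    next
      case (snoc h hs) thus ?case using elem_carrier by (auto intro!: mult_carrier_mat)
    qed
    thus ?thesis using snoc.prems by auto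
  qed
  have IH: "foldl (\<lambda>acc g. g * acc) A gs = foldl (\<lambda>acc g. g * acc) (1\<^sub>m 4) gs * A"
    using snoc.IH[OF _ snoc.prems(2)] snoc.prems(1) by simp
  have "foldl (\<lambda>acc g. g * acc) A (gs @ [g]) = g * (foldl (\<lambda>acc g. g * acc) (1\<^sub>m 4) gs * A)"
    using IH by simp
  also have "\<dots> = (g * foldl (\<lambda>acc g. g * acc) (1\<^sub>m 4) gs) * A"
    using assoc_mult_mat[OF g f snoc.prems(2)] by simp
  finally show ?case by simp
qed

lemma circ_carrier: "set gs \<subseteq> elementary_gates \<Longrightarrow> circuit_matrix gs \<in> carrier_mat 4 4"
proof (induction gs rule: rev_induct)
  case Nil thus ?case by (simp add: circuit_matrix_def)
next
  case (snoc h hs) thus ?case using elem_carrier by (auto simp: circuit_matrix_def intro!: mult_carrier_mat)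
qed

lemma circ_append: "set gs1 \<subseteq> elementary_gates \<Longrightarrow> set gs2 \<subseteq> elementary_gates \<Longrightarrow>
  circuit_matrix (gs1 @ gs2) = circuit_matrix gs2 * circuit_matrix gs1"
  unfolding circuit_matrix_def foldl_append
  by (rule foldl_circ) (auto simp: circ_carrier[unfolded circuit_matrix_def])

definition realizes :: "complex mat \<Rightarrow> complex mat list \<Rightarrow> bool" where
  "realizes V gs \<longleftrightarrow> set gs \<subseteq> elementary_gates \<and> (\<exists>c. cmod c = 1 \<and> V = c \<cdot>\<^sub>m circuit_matrix gs)"

lemma realizes_append: "realizes V1 gs1 \<Longrightarrow> realizes V2 gs2 \<Longrightarrow> realizes (V2 * V1) (gs1 @ gs2)"
proof -
  assume r1: "realizes V1 gs1" and r2: "realizes V2 gs2"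
  then obtain c1 c2 where c: "cmod c1 = 1" "cmod c2 = 1" and V: "V1 = c1 \<cdot>\<^sub>m circuit_matrix gs1"
     "V2 = c2 \<cdot>\<^sub>m circuit_matrix gs2" and s: "set gs1 \<subseteq> elementary_gates" "set gs2 \<subseteq> elementary_gates"
    unfolding realizes_def by auto
  have C: "circuit_matrix gs1 \<in> carrier_mat 4 4" "circuit_matrix gs2 \<in> carrier_mat 4 4"
    using s circ_carrier by auto
  have e: "V2 * V1 = (c2 * c1) \<cdot>\<^sub>m circuit_matrix (gs1 @ gs2)"
    unfolding V circ_append[OF s] using C
    by (simp add: mult_smult_assoc_mat[of _ 4 4 _ 4] mult_smult_distrib[of _ 4 4 _ 4] smult_smult_times mult.commute)
  have n: "cmod (c2 * c1) = 1" using c by (simp add: norm_mult)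
  have s3: "set (gs1 @ gs2) \<subseteq> elementary_gates" using s by simp
  show ?thesis unfolding realizes_def using s3 n e by blast
qed

lemma realizes_phase: "realizes V gs \<Longrightarrow> cmod d = 1 \<Longrightarrow> realizes (d \<cdot>\<^sub>m V) gs"
proof -
  assume "realizes V gs" "cmod d = 1"
  then obtain c where "set gs \<subseteq> elementary_gates" "cmod c = 1" "V = c \<cdot>\<^sub>m circuit_matrix gs"
    unfolding realizes_def by auto
  moreover have "d \<cdot>\<^sub>m V = (d * c) \<cdot>\<^sub>m circuit_matrix gs" using \<open>V = _\<close> by (simp add: smult_smult_times)
  moreover have "cmod (d * c) = 1" using \<open>cmod d = 1\<close> \<open>cmod c = 1\<close> by (simp add: norm_mult)
  ultimately show ?thesis unfolding realizes_def by blast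
qed

lemma realizes_gate: "g \<in> elementary_gates \<Longrightarrow> realizes g [g]"
proof -
  assume g: "g \<in> elementary_gates"
  have "circuit_matrix [g] = g * 1\<^sub>m 4" unfolding circuit_matrix_def by simp
  also have "\<dots> = g" using elem_carrier[OF g] by simp
  moreover have "1 \<cdot>\<^sub>m g = g" by (rule eq_matI) auto
  ultimately have "g = 1 \<cdot>\<^sub>m circuit_matrix [g]" by simp
  thus ?thesis unfolding realizes_def using g by (intro conjI exI[of _ 1]) auto
qed



lemma cis_per: "cis (x + 2*pi*of_int k) = cis x"
proof -
  have a: "cis x * cis (2*pi*of_int k) = cis (x + 2*pi*of_int k)" by (rule cis_mult)
  have b: "cis (2*pi*of_int k) = 1" by (rule cis_multiple_2pi) simp
  show ?thesis using a b by simp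
qed

lemma cis_pi_shift: "cis (x + pi) = - cis x"
proof -
  have "cis x * cis pi = cis (x + pi)" by (rule cis_mult)
  thus ?thesis by simp
qed

lemma angle_norm: "\<exists>t' s. 0 \<le> t' \<and> t' < 2*pi \<and> (s = 1 \<or> s = -1) \<and> Ry t = s \<cdot>\<^sub>m Ry t' \<and> Rz t = s \<cdot>\<^sub>m Rz t'"
proof -
  define k where "k = \<lfloor>t / (4*pi)\<rfloor>"
  define t1 where "t1 = t - 4*pi*k"
  have k1: "of_int k \<le> t / (4*pi)" "t / (4*pi) < of_int k + 1" unfolding k_def by linarith+
  have t1: "0 \<le> t1" "t1 < 4*pi" using k1 pi_gt_zero unfolding t1_def by (auto simp: field_simps)
  have h: "t/2 = t1/2 + 2*pi*of_int k" unfolding t1_def by (simp add: field_simps)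
  have "cos (t/2) = cos (t1/2)" "sin (t/2) = sin (t1/2)" unfolding h
    by (simp_all add: cos_add sin_add)
  moreover have "cis (t/2) = cis (t1/2)" unfolding h by (rule cis_per)
  moreover have "cis (-(t/2)) = cis (-(t1/2))"
  proof -
    have "-(t/2) = -(t1/2) + 2*pi*of_int (-k)" unfolding h by simp
    thus ?thesis using cis_per by metis
  qed
  ultimately have e1: "Ry t = Ry t1" "Rz t = Rz t1" by (simp_all add: Ry_m2 Rz_m2)
  show ?thesis
  proof (cases "t1 < 2*pi")
    case True thus ?thesis using e1 t1 by (intro exI[of _ t1] exI[of _ 1]) auto
  next
    case False
    define t2 where "t2 = t1 - 2*pi"
    have t2: "0 \<le> t2" "t2 < 2*pi" using False t1 unfolding t2_def by auto
    have h2: "t1/2 = t2/2 + pi" unfolding t2_def by (simp add: field_simps)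
    have "cis (t1/2) = - cis (t2/2)" unfolding h2 by (rule cis_pi_shift)
    moreover have "cis (-(t1/2)) = - cis (-(t2/2))"
    proof -
      have "-(t1/2) = (-(t2/2) - 2*pi) + pi" unfolding h2 by simp
      hence "cis (-(t1/2)) = - cis (-(t2/2) - 2*pi)" using cis_pi_shift by metis
      also have "cis (-(t2/2) - 2*pi) = cis (-(t2/2))" using cis_per[of "-(t2/2)" "-1"] by simp
      finally show ?thesis .
    qed
    ultimately have "Ry t1 = (-1) \<cdot>\<^sub>m Ry t2" "Rz t1 = (-1) \<cdot>\<^sub>m Rz t2"
      by (simp_all add: Ry_m2 Rz_m2 m2_smult h2)
    thus ?thesis using e1 t2 by (intro exI[of _ t2] exI[of _ "-1"]) auto
  qed
qed

definition unitary2 :: "complex mat \<Rightarrow> bool" where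
  "unitary2 A \<longleftrightarrow> A \<in> carrier_mat 2 2 \<and> A * conj_transpose A = 1\<^sub>m 2"

lemma cnj_unit: "cmod c = 1 \<Longrightarrow> cnj c = 1 / c"
proof -
  assume "cmod c = 1"
  hence "c * cnj c = 1" using complex_norm_square[of c] by simp
  thus ?thesis by (metis nonzero_eq_divide_eq mult.commute one_neq_zero mult_zero_left)
qed

lemma euler:
  assumes A: "unitary2 A"
  shows "\<exists>c a b d. cmod c = 1 \<and> A = c \<cdot>\<^sub>m (Rz a * Ry b * Rz d)"
proof -
  define p where "p = A $$ (0,0)"
  define q where "q = A $$ (0,1)"
  define r where "r = A $$ (1,0)"
  define s where "s = A $$ (1,1)"
  have Am: "A = m2 p q r s" using A m2_expand unfolding unitary2_def p_def q_def r_def s_def by blast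
  have "m2 p q r s * conj_transpose (m2 p q r s) = m2 1 0 0 1" using A unfolding unitary2_def Am m2_one by simp
  hence e: "p * cnj p + q * cnj q = 1" "p * cnj r + q * cnj s = 0" "r * cnj r + s * cnj s = 1"
    unfolding m2_ct m2_mult m2_eq_iff by auto
  have e2': "cnj p * r + cnj q * s = 0" using arg_cong[OF e(2), of cnj] by simp
  define \<delta> where "\<delta> = p * s - q * r"
  have "(p*s - q*r) * cnj p = s * (p * cnj p + q * cnj q) - q * (cnj p * r + cnj q * s)" by (simp add: algebra_simps)
  hence hs: "s = \<delta> * cnj p" unfolding \<delta>_def using e(1) e2' by simp
  have "- (p*s - q*r) * cnj q = r * (p * cnj p + q * cnj q) - p * (cnj p * r + cnj q * s)" by (simp add: algebra_simps)
  hence hr: "r = - \<delta> * cnj q" unfolding \<delta>_def using e(1) e2' by simp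
  have dd: "\<delta> * cnj \<delta> = 1"
  proof -
    have "r * cnj r + s * cnj s = \<delta> * cnj \<delta> * (p * cnj p + q * cnj q)" unfolding hs hr by (simp add: algebra_simps)
    thus ?thesis using e by simp
  qed
  have nd: "cmod \<delta> = 1"
  proof -
    have "complex_of_real ((cmod \<delta>)\<^sup>2) = 1" using dd complex_norm_square[of \<delta>] by simp
    hence "(cmod \<delta>)\<^sup>2 = 1" by (metis of_real_eq_1_iff)
    thus ?thesis using norm_ge_zero[of \<delta>] by (auto simp: power2_eq_1_iff)
  qed
  define c where "c = csqrt \<delta>"
  have c2: "c * c = \<delta>" unfolding c_def using power2_csqrt[of \<delta>] by (simp add: power2_eq_square)
  have nc: "cmod c = 1"
    unfolding c_def using nd by simp
  have c0: "c \<noteq> 0" using nc by auto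
  have cc: "cnj c = 1 / c" using cnj_unit[OF nc] .
  define p1 where "p1 = p / c"
  define q1 where "q1 = q / c"
  have np: "cmod p1 = cmod p" "cmod q1 = cmod q" unfolding p1_def q1_def using nc by (simp_all add: norm_divide)
  have pq: "(cmod p)\<^sup>2 + (cmod q)\<^sup>2 = 1"
  proof -
    have "complex_of_real ((cmod p)\<^sup>2 + (cmod q)\<^sup>2) = 1" using e(1) complex_norm_square[of p] complex_norm_square[of q] by simp
    thus ?thesis by (metis of_real_eq_1_iff)
  qed
  define x where "x = Arg p1"
  define y where "y = Arg q1"
  have p1e: "p1 = complex_of_real (cmod p) * cis x" using rcis_cmod_Arg[of p1] np unfolding x_def rcis_def by simp
  have q1e: "q1 = complex_of_real (cmod q) * cis y" using rcis_cmod_Arg[of q1] np unfolding y_def rcis_def by simp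
  define b where "b = 2 * arccos (cmod p)"
  have cp1: "cmod p \<le> 1"
  proof (rule power2_le_imp_le)
    have h: "0 \<le> (cmod q)\<^sup>2" by simp
    show "(cmod p)\<^sup>2 \<le> 1\<^sup>2" using pq h unfolding one_power2 by linarith
  qed simp
  have m1: "-1 \<le> cmod p" using norm_ge_zero[of p] by linarith
  have cb: "cos (b/2) = cmod p" unfolding b_def using cp1 m1 by simp
  have sb: "sin (b/2) = cmod q"
  proof -
    have "sin (b/2) = sqrt (1 - (cmod p)\<^sup>2)" unfolding b_def using cp1 m1 by (simp add: sin_arccos_abs)
    also have "1 - (cmod p)\<^sup>2 = (cmod q)\<^sup>2" using pq by simp
    finally show ?thesis by simp
  qed
  define a where "a = -(x+y)"
  define d where "d = y - x"
  have x1: "cis (-(a/2)) * cis (-(d/2)) = cis x" unfolding cis_mult a_def d_def by (simp add: field_simps)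
  have x2: "cis (-(a/2)) * cis (d/2) = cis y" unfolding cis_mult a_def d_def by (simp add: field_simps)
  have x3: "cis (a/2) * cis (-(d/2)) = cis (-y)" unfolding cis_mult a_def d_def by (simp add: field_simps)
  have x4: "cis (a/2) * cis (d/2) = cis (-x)" unfolding cis_mult a_def d_def by (simp add: field_simps)
  have E: "Rz a * Ry b * Rz d = m2 (cis (-(a/2)) * cis (-(d/2)) * cos (b/2)) (cis (-(a/2)) * cis (d/2) * sin (b/2))
     (- (cis (a/2) * cis (-(d/2)) * sin (b/2))) (cis (a/2) * cis (d/2) * cos (b/2))"
    unfolding Rz_m2 Ry_m2 m2_mult by (simp add: algebra_simps)
  have f1: "c * (cis x * cmod p) = p" using p1e c0 unfolding p1_def by (simp add: field_simps)
  have f2: "c * (cis y * cmod q) = q" using q1e c0 unfolding q1_def by (simp add: field_simps)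
  have f3: "c * (- (cis (-y) * cmod q)) = r"
  proof -
    have "cnj q1 = cis (-y) * cmod q" unfolding q1e by (simp add: cis_cnj)
    hence "cis (-y) * cmod q = cnj q / cnj c" unfolding q1_def by simp
    hence "c * (- (cis (-y) * cmod q)) = - (c * c) * cnj q" using c0 unfolding cc by (simp add: field_simps)
    thus ?thesis unfolding c2 hr by simp
  qed
  have f4: "c * (cis (-x) * cmod p) = s"
  proof -
    have "cnj p1 = cis (-x) * cmod p" unfolding p1e by (simp add: cis_cnj)
    hence "cis (-x) * cmod p = cnj p / cnj c" unfolding p1_def by simp
    hence "c * (cis (-x) * cmod p) = (c * c) * cnj p" using c0 unfolding cc by (simp add: field_simps)
    thus ?thesis unfolding c2 hs by simp
  qed
  have "A = c \<cdot>\<^sub>m (Rz a * Ry b * Rz d)"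
    unfolding E m2_smult Am x1 x2 x3 x4 cb sb f1 f2 f3 f4 by simp
  thus ?thesis using nc by blast
qed

lemma ct_carrier[simp]: "A \<in> carrier_mat n m \<Longrightarrow> conj_transpose A \<in> carrier_mat m n"
  by (simp add: conj_transpose_def)
lemma ct_dims[simp]: "dim_row (conj_transpose A) = dim_col A" "dim_col (conj_transpose A) = dim_row A"
  by (simp_all add: conj_transpose_def)
lemma ct_index[simp]: "i < dim_col A \<Longrightarrow> j < dim_row A \<Longrightarrow> conj_transpose A $$ (i,j) = cnj (A $$ (j,i))"
  by (simp add: conj_transpose_def)

lemma ct_ct[simp]: "conj_transpose (conj_transpose A) = A"
  by (rule eq_matI) auto

lemma ct_mult: "A \<in> carrier_mat n m \<Longrightarrow> B \<in> carrier_mat m k \<Longrightarrow>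
  conj_transpose (A * B) = conj_transpose B * conj_transpose A"
  by (rule eq_matI) (auto simp: scalar_prod_def cnj_sum mult.commute intro!: sum.cong)

lemma ct_one[simp]: "conj_transpose (1\<^sub>m n) = 1\<^sub>m n"
  by (rule eq_matI) auto

lemma ct_smult: "conj_transpose (c \<cdot>\<^sub>m A) = cnj c \<cdot>\<^sub>m conj_transpose A"
  by (rule eq_matI) auto

lemma m2_obt: assumes "A \<in> carrier_mat 2 2" obtains a b c d where "A = m2 a b c d"
  using m2_expand[OF assms] by blast

lemma kron2_gen_mult: "kron2 (m2 a00 a01 a10 a11) (m2 b00 b01 b10 b11) * kron2 (m2 c00 c01 c10 c11) (m2 d00 d01 d10 d11)
  = kron2 (m2 a00 a01 a10 a11 * m2 c00 c01 c10 c11) (m2 b00 b01 b10 b11 * m2 d00 d01 d10 d11)"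
  unfolding kron2_m2 m2_mult m4_mult by (simp add: m4_eq_iff algebra_simps)

lemma kron2_mult: assumes "A \<in> carrier_mat 2 2" "B \<in> carrier_mat 2 2" "C \<in> carrier_mat 2 2" "D \<in> carrier_mat 2 2"
  shows "kron2 A B * kron2 C D = kron2 (A * C) (B * D)"
proof -
  obtain a b c d where A: "A = m2 a b c d" using m2_obt[OF assms(1)] .
  obtain e f g h where B: "B = m2 e f g h" using m2_obt[OF assms(2)] .
  obtain a' b' c' d' where C: "C = m2 a' b' c' d'" using m2_obt[OF assms(3)] .
  obtain e' f' g' h' where D: "D = m2 e' f' g' h'" using m2_obt[OF assms(4)] .
  show ?thesis unfolding A B C D by (rule kron2_gen_mult)
qed

lemma kron2_smult: assumes "A \<in> carrier_mat 2 2" "B \<in> carrier_mat 2 2"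
  shows "kron2 (c \<cdot>\<^sub>m A) B = c \<cdot>\<^sub>m kron2 A B"
proof -
  obtain a b c d where A: "A = m2 a b c d" using m2_obt[OF assms(1)] .
  obtain e f g h where B: "B = m2 e f g h" using m2_obt[OF assms(2)] .
  show ?thesis unfolding A B by (simp add: m2_smult kron2_m2 m4_smult algebra_simps)
qed

lemma kron2_ct: assumes "A \<in> carrier_mat 2 2" "B \<in> carrier_mat 2 2"
  shows "conj_transpose (kron2 A B) = kron2 (conj_transpose A) (conj_transpose B)"
proof -
  obtain a b c d where A: "A = m2 a b c d" using m2_obt[OF assms(1)] .
  obtain e f g h where B: "B = m2 e f g h" using m2_obt[OF assms(2)] .
  show ?thesis unfolding A B by (simp add: m2_ct kron2_m2 m4_ct algebra_simps)
qed

lemma id2_carrier[simp]: "id2 \<in> carrier_mat 2 2" by (simp add: id2_def)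

lemma kron2_split: assumes "A \<in> carrier_mat 2 2" "B \<in> carrier_mat 2 2"
  shows "kron2 A B = kron2 A id2 * kron2 id2 B"
  using assms by (simp add: kron2_mult id2_def)

lemma unitary2_ct: "unitary2 A \<Longrightarrow> unitary2 (conj_transpose A)"
  unfolding unitary2_def using mat_mult_left_right_inverse[of A 2 "conj_transpose A"] by auto

lemma unitary2_mult: assumes "unitary2 A" "unitary2 B" shows "unitary2 (A * B)"
proof -
  have A: "A \<in> carrier_mat 2 2" "A * conj_transpose A = 1\<^sub>m 2" and B: "B \<in> carrier_mat 2 2" "B * conj_transpose B = 1\<^sub>m 2"
    using assms unfolding unitary2_def by auto
  have cA: "conj_transpose A \<in> carrier_mat 2 2" and cB: "conj_transpose B \<in> carrier_mat 2 2" using A B by auto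
  have "A * B * conj_transpose (A * B) = A * B * (conj_transpose B * conj_transpose A)"
    using ct_mult[OF A(1) B(1)] by simp
  also have "\<dots> = A * (B * (conj_transpose B * conj_transpose A))"
    using assoc_mult_mat[OF A(1) B(1), of _ 2] cA cB by auto
  also have "B * (conj_transpose B * conj_transpose A) = (B * conj_transpose B) * conj_transpose A"
    using assoc_mult_mat[OF B(1) cB cA] by simp
  also have "\<dots> = conj_transpose A" using B(2) left_mult_one_mat[OF cA] by simp
  also have "A * conj_transpose A = 1\<^sub>m 2" using A(2) .
  finally show ?thesis using A B unfolding unitary2_def by simp
qed

lemma Ry_carrier[simp]: "Ry t \<in> carrier_mat 2 2" by (simp add: Ry_m2)
lemma Rz_carrier[simp]: "Rz t \<in> carrier_mat 2 2" by (simp add: Rz_m2)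

lemma not_cnot:
  "kron2 (Ry t) id2 \<notin> cnot_gates" "kron2 id2 (Ry t) \<notin> cnot_gates"
  "kron2 (Rz t) id2 \<notin> cnot_gates" "kron2 id2 (Rz t) \<notin> cnot_gates"
proof -
  have sc: "\<not> (cos (t/2) = 0 \<and> sin (t/2) = 0)"
  proof
    assume "cos (t/2) = 0 \<and> sin (t/2) = 0"
    thus False using sin_cos_squared_add[of "t/2"] by simp
  qed
  have cz: "cis x \<noteq> 0" for x by simp
  show "kron2 (Ry t) id2 \<notin> cnot_gates" "kron2 id2 (Ry t) \<notin> cnot_gates"
    "kron2 (Rz t) id2 \<notin> cnot_gates" "kron2 id2 (Rz t) \<notin> cnot_gates"
    unfolding cnot_gates_def CNOT1_m4 CNOT2_m4 Ry_m2 Rz_m2 id2_m2 kron2_m2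
    using sc by (auto simp: m4_eq_iff)
qed

lemma rot_gates:
  "\<exists>g. realizes (kron2 (Ry t) id2) [g] \<and> g \<notin> cnot_gates"
  "\<exists>g. realizes (kron2 id2 (Ry t)) [g] \<and> g \<notin> cnot_gates"
  "\<exists>g. realizes (kron2 (Rz t) id2) [g] \<and> g \<notin> cnot_gates"
  "\<exists>g. realizes (kron2 id2 (Rz t)) [g] \<and> g \<notin> cnot_gates"
proof -
  obtain t' s where ts: "0 \<le> t'" "t' < 2*pi" "s = 1 \<or> s = -1" "Ry t = s \<cdot>\<^sub>m Ry t'" "Rz t = s \<cdot>\<^sub>m Rz t'"
    using angle_norm[of t] by blast
  have ns: "cmod s = 1" using ts(3) by auto
  have k2: "kron2 A (s \<cdot>\<^sub>m B) = s \<cdot>\<^sub>m kron2 A B" if A2: "A \<in> carrier_mat 2 2" and B2: "B \<in> carrier_mat 2 2" for A B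
  proof -
    obtain a b c d where A: "A = m2 a b c d" using m2_obt[OF A2] .
    obtain e f g h where B: "B = m2 e f g h" using m2_obt[OF B2] .
    show ?thesis unfolding A B by (simp add: m2_smult kron2_m2 m4_smult algebra_simps)
  qed
  have e: "kron2 (Ry t') id2 \<in> elementary_gates" "kron2 id2 (Ry t') \<in> elementary_gates"
     "kron2 (Rz t') id2 \<in> elementary_gates" "kron2 id2 (Rz t') \<in> elementary_gates"
    unfolding elementary_gates_def using ts(1,2) by blast+
  show "\<exists>g. realizes (kron2 (Ry t) id2) [g] \<and> g \<notin> cnot_gates"
    using realizes_phase[OF realizes_gate[OF e(1)] ns] not_cnot ts(4) kron2_smult[of "Ry t'" id2 s] by auto
  show "\<exists>g. realizes (kron2 id2 (Ry t)) [g] \<and> g \<notin> cnot_gates"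
    using realizes_phase[OF realizes_gate[OF e(2)] ns] not_cnot ts(4) k2[of id2 "Ry t'"] by auto
  show "\<exists>g. realizes (kron2 (Rz t) id2) [g] \<and> g \<notin> cnot_gates"
    using realizes_phase[OF realizes_gate[OF e(3)] ns] not_cnot ts(5) kron2_smult[of "Rz t'" id2 s] by auto
  show "\<exists>g. realizes (kron2 id2 (Rz t)) [g] \<and> g \<notin> cnot_gates"
    using realizes_phase[OF realizes_gate[OF e(4)] ns] not_cnot ts(5) k2[of id2 "Rz t'"] by auto
qed

lemma RyRz_dims[simp]: "dim_row (Ry t) = 2" "dim_col (Ry t) = 2" "dim_row (Rz t) = 2" "dim_col (Rz t) = 2"
  by (simp_all add: Ry_m2 Rz_m2)

lemma kron2_dims[simp]: "dim_row (kron2 A B) = 4" "dim_col (kron2 A B) = 4"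
  by (simp_all add: kron2_def)

definition nocnot :: "complex mat list \<Rightarrow> bool" where
  "nocnot gs \<longleftrightarrow> (\<forall>g\<in>set gs. g \<notin> cnot_gates)"

lemma kron2_mult_l: "X \<in> carrier_mat 2 2 \<Longrightarrow> Y \<in> carrier_mat 2 2 \<Longrightarrow> kron2 (X * Y) id2 = kron2 X id2 * kron2 Y id2"
  using kron2_mult[of X id2 Y id2] by (simp add: id2_def)
lemma kron2_mult_r: "X \<in> carrier_mat 2 2 \<Longrightarrow> Y \<in> carrier_mat 2 2 \<Longrightarrow> kron2 id2 (X * Y) = kron2 id2 X * kron2 id2 Y"
  using kron2_mult[of id2 X id2 Y] by (simp add: id2_def)
lemma kron2_smult_r: assumes "A \<in> carrier_mat 2 2" "B \<in> carrier_mat 2 2"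
  shows "kron2 A (c \<cdot>\<^sub>m B) = c \<cdot>\<^sub>m kron2 A B"
proof -
  obtain a b c d where A: "A = m2 a b c d" using m2_obt[OF assms(1)] .
  obtain e f g h where B: "B = m2 e f g h" using m2_obt[OF assms(2)] .
  show ?thesis unfolding A B by (simp add: m2_smult kron2_m2 m4_smult algebra_simps)
qed

lemma loc_left: assumes "unitary2 A"
  shows "\<exists>gs. realizes (kron2 A id2) gs \<and> length gs = 3 \<and> nocnot gs"
proof -
  obtain c a b d where c: "cmod c = 1" and A: "A = c \<cdot>\<^sub>m (Rz a * Ry b * Rz d)" using euler[OF assms] by blast
  have "Rz a * Ry b * Rz d = Rz a * (Ry b * Rz d)" by (rule assoc_mult_mat[of _ 2 2]) auto
  moreover have car: "Ry b * Rz d \<in> carrier_mat 2 2" "Rz a * (Ry b * Rz d) \<in> carrier_mat 2 2"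
    by (meson mult_carrier_mat Ry_carrier Rz_carrier)+
  ultimately have kA: "kron2 A id2 = c \<cdot>\<^sub>m (kron2 (Rz a) id2 * (kron2 (Ry b) id2 * kron2 (Rz d) id2))"
    unfolding A by (simp add: kron2_smult[OF car(2)] kron2_mult_l[OF _ car(1)] kron2_mult_l)
  obtain ga where ga: "realizes (kron2 (Rz a) id2) [ga]" "ga \<notin> cnot_gates" using rot_gates(3) by blast
  obtain gb where gb: "realizes (kron2 (Ry b) id2) [gb]" "gb \<notin> cnot_gates" using rot_gates(1) by blast
  obtain gd where gd: "realizes (kron2 (Rz d) id2) [gd]" "gd \<notin> cnot_gates" using rot_gates(3) by blast
  have "realizes (kron2 A id2) (([gd] @ [gb]) @ [ga])"
    unfolding kA by (intro realizes_phase c realizes_append ga gb gd)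
  thus ?thesis using ga gb gd unfolding nocnot_def by (intro exI[of _ "([gd] @ [gb]) @ [ga]"]) auto
qed

lemma loc_right: assumes "unitary2 A"
  shows "\<exists>gs. realizes (kron2 id2 A) gs \<and> length gs = 3 \<and> nocnot gs"
proof -
  obtain c a b d where c: "cmod c = 1" and A: "A = c \<cdot>\<^sub>m (Rz a * Ry b * Rz d)" using euler[OF assms] by blast
  have "Rz a * Ry b * Rz d = Rz a * (Ry b * Rz d)" by (rule assoc_mult_mat[of _ 2 2]) auto
  moreover have car: "Ry b * Rz d \<in> carrier_mat 2 2" "Rz a * (Ry b * Rz d) \<in> carrier_mat 2 2"
    by (meson mult_carrier_mat Ry_carrier Rz_carrier)+
  ultimately have kA: "kron2 id2 A = c \<cdot>\<^sub>m (kron2 id2 (Rz a) * (kron2 id2 (Ry b) * kron2 id2 (Rz d)))"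
    unfolding A by (simp add: kron2_smult_r[OF _ car(2)] kron2_mult_r[OF _ car(1)] kron2_mult_r)
  obtain ga where ga: "realizes (kron2 id2 (Rz a)) [ga]" "ga \<notin> cnot_gates" using rot_gates(4) by blast
  obtain gb where gb: "realizes (kron2 id2 (Ry b)) [gb]" "gb \<notin> cnot_gates" using rot_gates(2) by blast
  obtain gd where gd: "realizes (kron2 id2 (Rz d)) [gd]" "gd \<notin> cnot_gates" using rot_gates(4) by blast
  have "realizes (kron2 id2 A) (([gd] @ [gb]) @ [ga])"
    unfolding kA by (intro realizes_phase c realizes_append ga gb gd)
  thus ?thesis using ga gb gd unfolding nocnot_def by (intro exI[of _ "([gd] @ [gb]) @ [ga]"]) auto
qed

lemma loc: assumes "unitary2 A" "unitary2 B"
  shows "\<exists>gs. realizes (kron2 A B) gs \<and> length gs = 6 \<and> nocnot gs"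
proof -
  obtain g1 where g1: "realizes (kron2 A id2) g1" "length g1 = 3" "nocnot g1" using loc_left[OF assms(1)] by blast
  obtain g2 where g2: "realizes (kron2 id2 B) g2" "length g2 = 3" "nocnot g2" using loc_right[OF assms(2)] by blast
  have "kron2 A B = kron2 A id2 * kron2 id2 B" using assms unfolding unitary2_def by (intro kron2_split) auto
  hence "realizes (kron2 A B) (g2 @ g1)" using realizes_append[OF g2(1) g1(1)] by simp
  thus ?thesis using g1 g2 unfolding nocnot_def by (intro exI[of _ "g2 @ g1"]) auto
qed

lemma cnot_real: "realizes CNOT1 [CNOT1]" "CNOT1 \<in> cnot_gates"
  by (auto intro!: realizes_gate simp: elementary_gates_def cnot_gates_def)

lemma core_real: "\<exists>gs. realizes (Ccirc a b c) gs \<and> length gs = 9 \<and> length (filter (\<lambda>g. g \<in> cnot_gates) gs) \<le> 4"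
proof -
  have C: "CNOT1 \<in> carrier_mat 4 4" by (simp add: CNOT1_m4)
  have K1: "kron2 (Ry (pi/2) * Rz a) (Rz c) = kron2 (Ry (pi/2)) id2 * (kron2 (Rz a) id2 * kron2 id2 (Rz c))"
  proof -
    have "kron2 (Ry (pi/2) * Rz a) (Rz c) = kron2 (Ry (pi/2) * Rz a) id2 * kron2 id2 (Rz c)"
      by (rule kron2_split) auto
    also have "\<dots> = kron2 (Ry (pi/2)) id2 * kron2 (Rz a) id2 * kron2 id2 (Rz c)" by (simp add: kron2_mult_l)
    also have "\<dots> = kron2 (Ry (pi/2)) id2 * (kron2 (Rz a) id2 * kron2 id2 (Rz c))"
      by (rule assoc_mult_mat[of _ 4 4]) auto
    finally show ?thesis .
  qed
  define X1 where "X1 = kron2 (Ry (pi/2)) id2"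
  define X2 where "X2 = kron2 (Rz a) id2"
  define X3 where "X3 = kron2 id2 (Rz c)"
  define X4 where "X4 = kron2 id2 (Rz b)"
  define X5 where "X5 = kron2 (Ry (-pi/2)) id2"
  have cs: "X1 \<in> carrier_mat 4 4" "X2 \<in> carrier_mat 4 4" "X3 \<in> carrier_mat 4 4" "X4 \<in> carrier_mat 4 4"
    "X5 \<in> carrier_mat 4 4" unfolding X1_def X2_def X3_def X4_def X5_def by auto
  have E: "Ccirc a b c = CNOT1 * (X1 * (X2 * (X3 * (CNOT1 * (X4 * (CNOT1 * (X5 * CNOT1)))))))"
    unfolding Ccirc_def K1 X1_def[symmetric] X2_def[symmetric] X3_def[symmetric] X4_def[symmetric] X5_def[symmetric]
    using C cs by (simp add: assoc_mult_mat[of _ 4 4 _ 4 _ 4])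
  obtain g1 where g1: "realizes X1 [g1]" "g1 \<notin> cnot_gates" using rot_gates(1) unfolding X1_def by blast
  obtain g2 where g2: "realizes X2 [g2]" "g2 \<notin> cnot_gates" using rot_gates(3) unfolding X2_def by blast
  obtain g3 where g3: "realizes X3 [g3]" "g3 \<notin> cnot_gates" using rot_gates(4) unfolding X3_def by blast
  obtain g4 where g4: "realizes X4 [g4]" "g4 \<notin> cnot_gates" using rot_gates(4) unfolding X4_def by blast
  obtain g5 where g5: "realizes X5 [g5]" "g5 \<notin> cnot_gates" using rot_gates(1) unfolding X5_def by blast
  define gs where "gs = ((((((([CNOT1] @ [g5]) @ [CNOT1]) @ [g4]) @ [CNOT1]) @ [g3]) @ [g2]) @ [g1]) @ [CNOT1]"
  have "realizes (Ccirc a b c) gs" unfolding E gs_def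
    by (intro realizes_append cnot_real g1 g2 g3 g4 g5)
  moreover have "length gs = 9" unfolding gs_def by simp
  moreover have "length (filter (\<lambda>g. g \<in> cnot_gates) gs) \<le> 4" unfolding gs_def using g1 g2 g3 g4 g5 by simp
  ultimately show ?thesis by blast
qed

lemma mc4: "(A::complex mat) \<in> carrier_mat 4 4 \<Longrightarrow> B \<in> carrier_mat 4 4 \<Longrightarrow> A * B \<in> carrier_mat 4 4"
  by (rule mult_carrier_mat)
lemma tc4: "(A::complex mat) \<in> carrier_mat 4 4 \<Longrightarrow> transpose_mat A \<in> carrier_mat 4 4" by simp
lemma cc4: "(A::complex mat) \<in> carrier_mat 4 4 \<Longrightarrow> conj_transpose A \<in> carrier_mat 4 4" by simp
lemma sc4: "(A::complex mat) \<in> carrier_mat 4 4 \<Longrightarrow> c \<cdot>\<^sub>m A \<in> carrier_mat 4 4" by simp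
lemma a4: "(A::complex mat) \<in> carrier_mat 4 4 \<Longrightarrow> B \<in> carrier_mat 4 4 \<Longrightarrow> C \<in> carrier_mat 4 4 \<Longrightarrow> A * B * C = A * (B * C)"
  by (rule assoc_mult_mat)
lemma can4: "(A::complex mat) * B = 1\<^sub>m 4 \<Longrightarrow> A \<in> carrier_mat 4 4 \<Longrightarrow> B \<in> carrier_mat 4 4 \<Longrightarrow> X \<in> carrier_mat 4 4 \<Longrightarrow> A * (B * X) = X"
proof -
  assume h: "A * B = 1\<^sub>m 4" "A \<in> carrier_mat 4 4" "B \<in> carrier_mat 4 4" "X \<in> carrier_mat 4 4"
  have "A * (B * X) = A * B * X" using assoc_mult_mat[OF h(2) h(3) h(4)] by simp
  also have "\<dots> = X" using h left_mult_one_mat[OF h(4)] by simp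
  finally show ?thesis .
qed
lemma l14: "(X::complex mat) \<in> carrier_mat 4 4 \<Longrightarrow> 1\<^sub>m 4 * X = X" by (rule left_mult_one_mat)
lemma r14: "(X::complex mat) \<in> carrier_mat 4 4 \<Longrightarrow> X * 1\<^sub>m 4 = X" by (rule right_mult_one_mat)
lemma tm4: "(A::complex mat) \<in> carrier_mat 4 4 \<Longrightarrow> B \<in> carrier_mat 4 4 \<Longrightarrow> transpose_mat (A * B) = transpose_mat B * transpose_mat A"
  by (rule transpose_mult)
lemma ctm4: "(A::complex mat) \<in> carrier_mat 4 4 \<Longrightarrow> B \<in> carrier_mat 4 4 \<Longrightarrow> conj_transpose (A * B) = conj_transpose B * conj_transpose A"
  by (rule ct_mult)
lemma sm14: "(A::complex mat) \<in> carrier_mat 4 4 \<Longrightarrow> B \<in> carrier_mat 4 4 \<Longrightarrow> (c \<cdot>\<^sub>m A) * B = c \<cdot>\<^sub>m (A * B)"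
  by (rule mult_smult_assoc_mat)
lemma sm24: "(A::complex mat) \<in> carrier_mat 4 4 \<Longrightarrow> B \<in> carrier_mat 4 4 \<Longrightarrow> A * (c \<cdot>\<^sub>m B) = c \<cdot>\<^sub>m (A * B)"
  by (rule mult_smult_distrib)
lemmas M4 = mc4 tc4 cc4 sc4 a4 can4 l14 r14 tm4 ctm4 sm14 sm24 smult_smult_times

definition Mg :: "complex mat" where
  "Mg = m4 sq2 (\<i>*sq2) 0 0  0 0 (\<i>*sq2) sq2  0 0 (\<i>*sq2) (-sq2)  sq2 (-\<i>*sq2) 0 0"

lemma cnj_sq2[simp]: "cnj sq2 = sq2" by (simp add: sq2_def)

lemma Mg_carrier[simp]: "Mg \<in> carrier_mat 4 4" "dim_row Mg = 4" "dim_col Mg = 4" by (simp_all add: Mg_def)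

lemma Mg_unit: "Mg * conj_transpose Mg = 1\<^sub>m 4" "conj_transpose Mg * Mg = 1\<^sub>m 4"
  unfolding Mg_def m4_ct m4_mult m4_one by (simp_all add: m4_eq_iff sq2_sq algebra_simps)

lemma Mg_M0: "Mg = sq2 \<cdot>\<^sub>m M0" "conj_transpose Mg = sq2 \<cdot>\<^sub>m conj_transpose M0"
  unfolding Mg_def M0_def m4_ct m4_smult by (simp_all add: m4_eq_iff algebra_simps)

lemma M0_carrier[simp]: "M0 \<in> carrier_mat 4 4" by (simp add: M0_def)

lemma Mg_conj: assumes X: "X \<in> carrier_mat 4 4"
  shows "Mg * X * conj_transpose Mg = (1/2) \<cdot>\<^sub>m (M0 * X * conj_transpose M0)"
proof -
  have cM: "conj_transpose M0 \<in> carrier_mat 4 4" by simp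
  have "Mg * X * conj_transpose Mg = Mg * X * (sq2 \<cdot>\<^sub>m conj_transpose M0)" by (simp only: Mg_M0(2))
  also have "\<dots> = (sq2 \<cdot>\<^sub>m M0) * X * (sq2 \<cdot>\<^sub>m conj_transpose M0)" by (simp only: Mg_M0(1))
  also have "\<dots> = sq2 \<cdot>\<^sub>m (sq2 \<cdot>\<^sub>m (M0 * X * conj_transpose M0))"
  proof -
    have MX: "M0 * X \<in> carrier_mat 4 4" using X by (simp add: mc4)
    show ?thesis using X cM mult_smult_assoc_mat[OF M0_carrier X] mult_smult_assoc_mat[OF MX, of "sq2 \<cdot>\<^sub>m conj_transpose M0" 4]
      mult_smult_distrib[OF MX cM] by simp
  qed
  also have "\<dots> = (1/2) \<cdot>\<^sub>m (M0 * X * conj_transpose M0)" by (simp add: smult_smult_times sq2_sq)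
  finally show ?thesis .
qed

definition ortho :: "complex mat \<Rightarrow> bool" where
  "ortho Q \<longleftrightarrow> Q \<in> carrier_mat 4 4 \<and> transpose_mat Q * Q = 1\<^sub>m 4 \<and> conj_transpose Q = transpose_mat Q"

definition goodO :: "complex mat \<Rightarrow> bool" where
  "goodO Q \<longleftrightarrow> ortho Q \<and> (\<exists>A B. unitary2 A \<and> unitary2 B \<and> Mg * Q * conj_transpose Mg = kron2 A B)"

lemma ortho_right: "ortho Q \<Longrightarrow> Q * transpose_mat Q = 1\<^sub>m 4"
  unfolding ortho_def using mat_mult_left_right_inverse[of "transpose_mat Q" 4 Q] by auto

lemma ct_transpose: "conj_transpose (transpose_mat A) = transpose_mat (conj_transpose A)"
  by (rule eq_matI) auto

lemma ortho_mult: assumes "ortho O1" "ortho O2" shows "ortho (O1 * O2)"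
proof -
  have Q: "O1 \<in> carrier_mat 4 4" "O2 \<in> carrier_mat 4 4" "transpose_mat O1 * O1 = 1\<^sub>m 4" "transpose_mat O2 * O2 = 1\<^sub>m 4"
    "conj_transpose O1 = transpose_mat O1" "conj_transpose O2 = transpose_mat O2" using assms unfolding ortho_def by auto
  show ?thesis unfolding ortho_def using Q by (simp add: M4)
qed

lemma ortho_transpose: assumes "ortho Q" shows "ortho (transpose_mat Q)"
proof -
  have Q: "Q \<in> carrier_mat 4 4" "conj_transpose Q = transpose_mat Q" using assms unfolding ortho_def by auto
  show ?thesis unfolding ortho_def using Q ortho_right[OF assms]
    by (simp add: ct_transpose)
qed

lemma Mg_hom: assumes "A \<in> carrier_mat 4 4" "B \<in> carrier_mat 4 4"
  shows "Mg * (A * B) * conj_transpose Mg = (Mg * A * conj_transpose Mg) * (Mg * B * conj_transpose Mg)"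
  using assms Mg_unit by (simp add: M4)

lemma goodO_mult: assumes "goodO O1" "goodO O2" shows "goodO (O1 * O2)"
proof -
  obtain A1 B1 A2 B2 where u: "unitary2 A1" "unitary2 B1" "unitary2 A2" "unitary2 B2"
    and e: "Mg * O1 * conj_transpose Mg = kron2 A1 B1" "Mg * O2 * conj_transpose Mg = kron2 A2 B2"
    using assms unfolding goodO_def by blast
  have c: "O1 \<in> carrier_mat 4 4" "O2 \<in> carrier_mat 4 4" using assms unfolding goodO_def ortho_def by auto
  have uc: "A1 \<in> carrier_mat 2 2" "B1 \<in> carrier_mat 2 2" "A2 \<in> carrier_mat 2 2" "B2 \<in> carrier_mat 2 2"
    using u unfolding unitary2_def by auto
  have "Mg * (O1 * O2) * conj_transpose Mg = kron2 A1 B1 * kron2 A2 B2" using Mg_hom[OF c] e by simp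
  also have "\<dots> = kron2 (A1 * A2) (B1 * B2)" by (rule kron2_mult[OF uc])
  finally have "Mg * (O1 * O2) * conj_transpose Mg = kron2 (A1 * A2) (B1 * B2)" .
  moreover have "ortho (O1 * O2)" using assms unfolding goodO_def by (blast intro: ortho_mult)
  moreover have "unitary2 (A1 * A2)" "unitary2 (B1 * B2)" using u by (simp_all add: unitary2_mult)
  ultimately show ?thesis unfolding goodO_def by blast
qed

lemma goodO_transpose: assumes "goodO Q" shows "goodO (transpose_mat Q)"
proof -
  obtain A B where u: "unitary2 A" "unitary2 B" and e: "Mg * Q * conj_transpose Mg = kron2 A B"
    using assms unfolding goodO_def by blast
  have Q: "Q \<in> carrier_mat 4 4" "conj_transpose Q = transpose_mat Q" using assms unfolding goodO_def ortho_def by auto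
  have "Mg * transpose_mat Q * conj_transpose Mg = conj_transpose (Mg * Q * conj_transpose Mg)"
    using Q by (simp add: M4)
  also have "\<dots> = kron2 (conj_transpose A) (conj_transpose B)" unfolding e
    using u unfolding unitary2_def by (simp add: kron2_ct)
  finally have "Mg * transpose_mat Q * conj_transpose Mg = kron2 (conj_transpose A) (conj_transpose B)" .
  moreover have "ortho (transpose_mat Q)" using assms unfolding goodO_def by (blast intro: ortho_transpose)
  moreover have "unitary2 (conj_transpose A)" "unitary2 (conj_transpose B)" using u by (simp_all add: unitary2_ct)
  ultimately show ?thesis unfolding goodO_def by blast
qed

lemma G_carrier[simp]: "G01 t \<in> carrier_mat 4 4" "G12 t \<in> carrier_mat 4 4" "G23 t \<in> carrier_mat 4 4"
  by (simp_all add: G01_def G12_def G23_def)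

lemma csc[simp]: "complex_of_real (cos x) * complex_of_real (cos x) + complex_of_real (sin x) * complex_of_real (sin x) = 1"
  "complex_of_real (sin x) * complex_of_real (sin x) + complex_of_real (cos x) * complex_of_real (cos x) = 1"
proof -
  show "complex_of_real (cos x) * complex_of_real (cos x) + complex_of_real (sin x) * complex_of_real (sin x) = 1"
    unfolding of_real_mult[symmetric] of_real_add[symmetric] sin_cos_squared_add3 by simp
  thus "complex_of_real (sin x) * complex_of_real (sin x) + complex_of_real (cos x) * complex_of_real (cos x) = 1" by (simp add: add.commute)
qed

lemma Ry_unit: "unitary2 (Ry t)"
  unfolding unitary2_def Ry_m2 m2_ct m2_mult m2_one
  apply (simp add: m2_eq_iff)
  done

lemma Rz_unit: "unitary2 (Rz t)"
  unfolding unitary2_def Rz_m2 m2_ct m2_mult m2_one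
  by (simp add: m2_eq_iff cis_cnj cis_mult)

lemma G_ortho: "ortho (G01 t)" "ortho (G12 t)" "ortho (G23 t)"
  unfolding ortho_def G01_def G12_def G23_def m4_ct m4_tr m4_mult m4_one
  by (simp_all add: m4_eq_iff)

lemma goodO_G: "goodO (G01 t)" "goodO (G12 t)" "goodO (G23 t)"
proof -
  have "Mg * G01 t * conj_transpose Mg = kron2 (Rz (-t)) (Rz (-t))" using G01_loc Mg_conj[of "G01 t"] by simp
  thus "goodO (G01 t)" unfolding goodO_def using G_ortho Rz_unit by blast
  have "Mg * G23 t * conj_transpose Mg = kron2 (Rz t) (Rz (-t))" using G23_loc Mg_conj[of "G23 t"] by simp
  thus "goodO (G23 t)" unfolding goodO_def using G_ortho Rz_unit by blast
  have "G12 t = G12 (2 * (t/2))" by simp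
  hence "Mg * G12 t * conj_transpose Mg = kron2 (Ry (-2*(t/2))) (Ry (-2*(t/2)))" using G12_loc[of "t/2"] Mg_conj[of "G12 t"] by simp
  thus "goodO (G12 t)" unfolding goodO_def using G_ortho Ry_unit by blast
qed

lemma all4: "(\<forall>i<(4::nat). P i) \<longleftrightarrow> P 0 \<and> P 1 \<and> P 2 \<and> P 3" by (auto simp: less4)
lemma all3: "(\<forall>i<(3::nat). P i) \<longleftrightarrow> P 0 \<and> P 1 \<and> P 2" by (auto simp: less_Suc_eq numeral_eq_Suc)
lemma all2: "(\<forall>i<(2::nat). P i) \<longleftrightarrow> P 0 \<and> P 1" by (auto simp: less2)
lemma all1: "(\<forall>i<(1::nat). P i) \<longleftrightarrow> P 0" by auto

lemma polar: assumes "a\<^sup>2 + b\<^sup>2 = (1::real)" obtains t where "cos t = a" "sin t = b"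
  using sincos_total_2pi[OF assms] by metis

lemma gv2: fixes x :: "nat \<Rightarrow> real" assumes "(x 2)\<^sup>2 + (x 3)\<^sup>2 = (1::real)"
  shows "\<exists>Q. goodO Q \<and> (\<forall>j<2. \<forall>i<4. Q$$(i,j) = (if i=j then 1 else 0)) \<and>
     Q$$(0,2) = 0 \<and> Q$$(1,2) = 0 \<and> Q$$(2,2) = x 2 \<and> Q$$(3,2) = x 3"
proof -
  obtain t where t: "cos t = x 2" "sin t = x 3" using polar[OF assms] .
  show ?thesis using goodO_G(3)[of t] t by (intro exI[of _ "G23 t"]) (simp add: all4 all2 G23_def)
qed

lemma gv1: fixes x :: "nat \<Rightarrow> real" assumes "(x 1)\<^sup>2 + (x 2)\<^sup>2 + (x 3)\<^sup>2 = (1::real)"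
  shows "\<exists>Q. goodO Q \<and> (\<forall>i<4. Q$$(i,0) = (if i=0 then 1 else 0)) \<and>
     Q$$(0,1) = 0 \<and> Q$$(1,1) = x 1 \<and> Q$$(2,1) = x 2 \<and> Q$$(3,1) = x 3"
proof -
  define r where "r = sqrt ((x 2)\<^sup>2 + (x 3)\<^sup>2)"
  have r0: "r \<ge> 0" unfolding r_def by simp
  have rr: "r\<^sup>2 = (x 2)\<^sup>2 + (x 3)\<^sup>2" unfolding r_def by simp
  obtain t where t: "cos t = x 1" "sin t = r" using polar[of "x 1" r] assms rr by (metis add.assoc)
  define y where "y = (\<lambda>i. if r = 0 then (if i = 2 then 1 else 0) else x i / r)"
  have y: "(y 2)\<^sup>2 + (y 3)\<^sup>2 = 1" "r * y 2 = x 2" "r * y 3 = x 3"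
  proof -
    show "(y 2)\<^sup>2 + (y 3)\<^sup>2 = 1"
      using rr by (cases "r = 0") (auto simp: y_def power_divide add_divide_distrib[symmetric])
    have "r = 0 \<Longrightarrow> x 2 = 0 \<and> x 3 = 0" using rr by (auto simp: add_nonneg_eq_0_iff)
    thus "r * y 2 = x 2" "r * y 3 = x 3" unfolding y_def by auto
  qed
  obtain P where P: "goodO P" "\<forall>j<2. \<forall>i<4. P$$(i,j) = (if i=j then 1 else 0)"
    "P$$(0,2) = 0" "P$$(1,2) = 0" "P$$(2,2) = y 2" "P$$(3,2) = y 3" using gv2[OF y(1)] by blast
  have Pc: "P \<in> carrier_mat 4 4" using P(1) unfolding goodO_def ortho_def by auto
  have Pe: "P = m4 1 0 0 (P$$(0,3))  0 1 0 (P$$(1,3))  0 0 (y 2) (P$$(2,3))  0 0 (y 3) (P$$(3,3))"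
    using m4_expand[OF Pc] P(2-6) by (simp add: all4 all2)
  define Q where "Q = P * G12 t"
  have "goodO Q" unfolding Q_def using P(1) goodO_G(2) by (rule goodO_mult)
  moreover have "Q = m4 1 0 0 (P$$(0,3))  0 (cos t) (- sin t) (P$$(1,3))
      0 (y 2 * sin t) (y 2 * cos t) (P$$(2,3))  0 (y 3 * sin t) (y 3 * cos t) (P$$(3,3))"
    unfolding Q_def G12_def by (subst Pe) (simp add: m4_mult)
  ultimately show ?thesis using t y by (intro exI[of _ Q]) (simp add: all4 mult.commute)
qed

lemma gv0: fixes x :: "nat \<Rightarrow> real" assumes "(x 0)\<^sup>2 + (x 1)\<^sup>2 + (x 2)\<^sup>2 + (x 3)\<^sup>2 = 1"
  shows "\<exists>Q. goodO Q \<and> Q$$(0,0) = x 0 \<and> Q$$(1,0) = x 1 \<and> Q$$(2,0) = x 2 \<and> Q$$(3,0) = x 3"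
proof -
  define r where "r = sqrt ((x 1)\<^sup>2 + (x 2)\<^sup>2 + (x 3)\<^sup>2)"
  have rr: "r\<^sup>2 = (x 1)\<^sup>2 + (x 2)\<^sup>2 + (x 3)\<^sup>2" unfolding r_def by simp
  obtain t where t: "cos t = x 0" "sin t = r" using polar[of "x 0" r] assms rr by (metis add.assoc)
  define y where "y = (\<lambda>i. if r = 0 then (if i = 1 then 1 else 0) else x i / r)"
  have y: "(y 1)\<^sup>2 + (y 2)\<^sup>2 + (y 3)\<^sup>2 = 1" "r * y 1 = x 1" "r * y 2 = x 2" "r * y 3 = x 3"
  proof -
    show "(y 1)\<^sup>2 + (y 2)\<^sup>2 + (y 3)\<^sup>2 = 1"
      using rr by (cases "r = 0") (auto simp: y_def power_divide add_divide_distrib[symmetric])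
    have "r = 0 \<Longrightarrow> x 1 = 0 \<and> x 2 = 0 \<and> x 3 = 0" using rr by (auto simp: add_nonneg_eq_0_iff)
    thus "r * y 1 = x 1" "r * y 2 = x 2" "r * y 3 = x 3" unfolding y_def by auto
  qed
  obtain P where P: "goodO P" "\<forall>i<4. P$$(i,0) = (if i=0 then 1 else 0)"
    "P$$(0,1) = 0" "P$$(1,1) = y 1" "P$$(2,1) = y 2" "P$$(3,1) = y 3" using gv1[OF y(1)] by blast
  have Pc: "P \<in> carrier_mat 4 4" using P(1) unfolding goodO_def ortho_def by auto
  have Pe: "P = m4 1 0 (P$$(0,2)) (P$$(0,3))  0 (y 1) (P$$(1,2)) (P$$(1,3))  0 (y 2) (P$$(2,2)) (P$$(2,3))  0 (y 3) (P$$(3,2)) (P$$(3,3))"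
    using m4_expand[OF Pc] P(2-6) by (simp add: all4)
  define Q where "Q = P * G01 t"
  have "goodO Q" unfolding Q_def using P(1) goodO_G(1) by (rule goodO_mult)
  moreover have "Q$$(0,0) = cos t" "Q$$(1,0) = y 1 * sin t" "Q$$(2,0) = y 2 * sin t" "Q$$(3,0) = y 3 * sin t"
    unfolding Q_def G01_def by (subst Pe, simp add: m4_mult)+
  ultimately show ?thesis using t y by (intro exI[of _ Q]) (simp add: mult.commute flip: of_real_mult)
qed

lemma givens_vec: fixes x :: "nat \<Rightarrow> real"
  assumes "k < 3" "(x 0)\<^sup>2 + (x 1)\<^sup>2 + (x 2)\<^sup>2 + (x 3)\<^sup>2 = 1" "\<forall>i<k. x i = 0"
  shows "\<exists>Q. goodO Q \<and> (\<forall>j<k. \<forall>i<4. Q$$(i,j) = (if i=j then 1 else 0)) \<and> (\<forall>i<4. Q$$(i,k) = x i)"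
proof -
  have "k = 0 \<or> k = 1 \<or> k = 2" using assms(1) by auto
  moreover {
    assume k: "k = 0"
    have ?thesis using gv0[OF assms(2)] unfolding k by (simp add: all4)
  }
  moreover {
    assume k: "k = 1"
    have "(x 1)\<^sup>2 + (x 2)\<^sup>2 + (x 3)\<^sup>2 = 1" using assms(2,3) k by simp
    from gv1[OF this] have ?thesis using assms(3) unfolding k by (simp add: all4 all1)
  }
  moreover {
    assume k: "k = 2"
    have "(x 2)\<^sup>2 + (x 3)\<^sup>2 = 1" using assms(2,3) k by (simp add: all2)
    from gv2[OF this] have ?thesis using assms(3) unfolding k by (simp add: all4 all2)
  }
  ultimately show ?thesis by blast
qed

lemma Dg_carrier[simp]: "Dg a b c d \<in> carrier_mat 4 4" by (simp add: Dg_def)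

lemma core_decomp: assumes "cmod g0 = 1" "cmod g1 = 1" "cmod g2 = 1" "cmod g3 = 1"
  shows "\<exists>c a b e. cmod c = 1 \<and> Mg * Dg g0 g1 g2 g3 * conj_transpose Mg = c \<cdot>\<^sub>m Ccirc a b e"
proof -
  have ga: "cis (Arg g) = g" if "cmod g = 1" for g using rcis_cmod_Arg[of g] that unfolding rcis_def by simp
  define f0 where "f0 = Arg g0"
  define f1 where "f1 = Arg g1"
  define f2 where "f2 = Arg g2"
  define f3 where "f3 = Arg g3"
  define s where "s = (f0 + f1 + f2 + f3) / 4"
  define p0 where "p0 = f0 - s"
  define p1 where "p1 = f1 - s"
  define p2 where "p2 = f2 - s"
  define p3 where "p3 = f3 - s"
  define a where "a = (p0 - p1 + p2 - p3) / 2"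
  define b where "b = (p0 - p1 - p2 + p3) / 2"
  define e where "e = p2 + p3"
  have sp: "p0 + p1 + p2 + p3 = 0" unfolding p0_def p1_def p2_def p3_def s_def by (simp add: field_simps)
  have h: "(a+b-e)/2 = p0" "-(a+b+e)/2 = p1" "(a-b+e)/2 = p2" "(-a+b+e)/2 = p3"
    using sp unfolding a_def b_def e_def by (simp_all add: field_simps)
  have gg: "g0 = cis s * cis p0" "g1 = cis s * cis p1" "g2 = cis s * cis p2" "g3 = cis s * cis p3"
    unfolding cis_mult p0_def p1_def p2_def p3_def using ga assms unfolding f0_def f1_def f2_def f3_def by simp_all
  have D: "Dg g0 g1 g2 g3 = cis s \<cdot>\<^sub>m Dg (cis ((a+b-e)/2)) (cis (-(a+b+e)/2)) (cis ((a-b+e)/2)) (cis ((-a+b+e)/2))"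
    unfolding h Dg_def m4_smult gg by simp
  have "Mg * Dg g0 g1 g2 g3 * conj_transpose Mg = cis s \<cdot>\<^sub>m (Mg * Dg (cis ((a+b-e)/2)) (cis (-(a+b+e)/2)) (cis ((a-b+e)/2)) (cis ((-a+b+e)/2)) * conj_transpose Mg)"
    unfolding D by (simp add: M4)
  also have "\<dots> = cis s \<cdot>\<^sub>m Ccirc a b e" by (simp add: Mg_conj Ccirc_diag)
  finally show ?thesis by (intro exI[of _ "cis s"] exI[of _ a] exI[of _ b] exI[of _ e]) simp
qed

definition mv :: "complex mat \<Rightarrow> (nat \<Rightarrow> complex) \<Rightarrow> nat \<Rightarrow> complex" where
  "mv S u i = (\<Sum>l\<in>{0..<4}. S$$(i,l) * u l)"

lemma eig_sub:
  assumes S: "S \<in> carrier_mat 4 4" "transpose_mat S = S" and k: "k < 4"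
    and D: "\<forall>j<k. \<forall>i<4. i \<noteq> j \<longrightarrow> S$$(i,j) = 0"
  shows "\<exists>\<mu> u. (\<exists>i<4. u i \<noteq> 0) \<and> (\<forall>i<k. u i = 0) \<and> (\<forall>i<4. mv S u i = \<mu> * u i)"
proof -
  define n where "n = 4 - k"
  have n: "n > 0" "n + k = 4" using k unfolding n_def by auto
  define T where "T = mat n n (\<lambda>(i,j). S$$(i+k, j+k))"
  have T: "T \<in> carrier_mat n n" unfolding T_def by simp
  obtain \<mu> where "\<mu> \<in> spectrum T" using spectrum_non_empty[OF T n(1)] by blast
  hence "eigenvalue T \<mu>" unfolding spectrum_def by simp
  then obtain w where w: "eigenvector T w \<mu>" unfolding eigenvalue_def by blast
  hence wc: "w \<in> carrier_vec n" and w0: "w \<noteq> 0\<^sub>v n" and Tw: "T *\<^sub>v w = \<mu> \<cdot>\<^sub>v w"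
    unfolding eigenvector_def using T by auto
  define u where "u = (\<lambda>i. if k \<le> i \<and> i < 4 then w $ (i - k) else 0)"
  have sym: "S$$(i,j) = S$$(j,i)" if "i < 4" "j < 4" for i j
    using arg_cong[OF S(2), of "\<lambda>A. A$$(j,i)"] that S(1) by auto
  have nz: "\<exists>i<4. u i \<noteq> 0"
  proof -
    obtain l where l: "l < n" "w $ l \<noteq> 0" using w0 wc by (metis eq_vecI carrier_vecD index_zero_vec(1,2))
    hence "u (l + k) \<noteq> 0" "l + k < 4" unfolding u_def using n by auto
    thus ?thesis by blast
  qed
  have shift: "mv S u i = (\<Sum>l\<in>{0..<n}. S$$(i, l + k) * w $ l)" for i
  proof -
    have "mv S u i = (\<Sum>l\<in>{0..<k}. S$$(i,l) * u l) + (\<Sum>l\<in>{k..<4}. S$$(i,l) * u l)"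
      unfolding mv_def using k by (simp add: sum.atLeastLessThan_concat)
    also have "(\<Sum>l\<in>{0..<k}. S$$(i,l) * u l) = 0" unfolding u_def by simp
    also have "(\<Sum>l\<in>{k..<4}. S$$(i,l) * u l) = (\<Sum>l\<in>{0+k..<n+k}. S$$(i,l) * u l)" using n by simp
    also have "\<dots> = (\<Sum>l\<in>{0..<n}. S$$(i,l+k) * u (l+k))" by (rule sum.shift_bounds_nat_ivl)
    also have "\<dots> = (\<Sum>l\<in>{0..<n}. S$$(i, l + k) * w $ l)" unfolding u_def using n by (intro sum.cong) auto
    finally show ?thesis by simp
  qed
  have ev: "mv S u i = \<mu> * u i" if i: "i < 4" for i
  proof (cases "k \<le> i")
    case True
    have "(T *\<^sub>v w) $ (i - k) = (\<Sum>l\<in>{0..<n}. S$$(i, l + k) * w $ l)"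
      using True i n wc unfolding T_def by (auto simp: scalar_prod_def intro!: sum.cong)
    moreover have "(T *\<^sub>v w) $ (i - k) = \<mu> * u i" unfolding Tw u_def using True i n wc by auto
    ultimately show ?thesis unfolding shift by simp
  next
    case False
    have "S$$(i, l + k) = 0" if "l < n" for l
    proof -
      have "S$$(i, l + k) = S$$(l + k, i)" using sym[of i "l+k"] i that n by simp
      also have "\<dots> = 0" using D False i that n by auto
      finally show ?thesis .
    qed
    hence "mv S u i = 0" unfolding shift by simp
    thus ?thesis unfolding u_def using False by simp
  qed
  have "\<forall>i<k. u i = 0" unfolding u_def by simp
  thus ?thesis using nz ev by blast
qed

lemma mv_mult: assumes "A \<in> carrier_mat 4 4" "B \<in> carrier_mat 4 4" "i < 4"
  shows "mv A (mv B v) i = mv (A * B) v i"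
proof -
  have "mv A (mv B v) i = (\<Sum>l\<in>{0..<4}. \<Sum>m\<in>{0..<4}. A$$(i,l) * (B$$(l,m) * v m))"
    unfolding mv_def by (simp add: sum_distrib_left)
  also have "\<dots> = (\<Sum>m\<in>{0..<4}. \<Sum>l\<in>{0..<4}. A$$(i,l) * (B$$(l,m) * v m))" by (rule sum.swap)
  also have "\<dots> = mv (A * B) v i"
    unfolding mv_def using assms by (auto simp: scalar_prod_def sum_distrib_right mult.assoc intro!: sum.cong)
  finally show ?thesis .
qed

lemma mv_one: "i < 4 \<Longrightarrow> mv (1\<^sub>m 4) v i = v i"
proof -
  assume i: "i < 4"
  have "mv (1\<^sub>m 4) v i = (\<Sum>l\<in>{0..<4}. if l = i then v l else 0)" unfolding mv_def using i by (intro sum.cong) auto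
  also have "\<dots> = v i" using i by (simp add: sum.delta)
  finally show ?thesis .
qed

lemma mv_lin: "mv S (\<lambda>l. a * f l + b * g l) i = a * mv S f i + b * mv S g i"
  unfolding mv_def by (simp add: sum.distrib sum_distrib_left algebra_simps)

lemma mv_scale: "mv S (\<lambda>l. a * f l) i = a * mv S f i"
  unfolding mv_def by (simp add: sum_distrib_left algebra_simps)

lemma mv_cong: "(\<And>l. l < 4 \<Longrightarrow> f l = g l) \<Longrightarrow> mv S f i = mv S g i"
  unfolding mv_def by (intro sum.cong) auto

lemma sym_entry: "S \<in> carrier_mat 4 4 \<Longrightarrow> transpose_mat S = S \<Longrightarrow> i < 4 \<Longrightarrow> j < 4 \<Longrightarrow> S$$(i,j) = S$$(j,i)"
  by (metis carrier_matD(1) carrier_matD(2) index_transpose_mat(1))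

lemma mv_ct: assumes "S \<in> carrier_mat 4 4" "transpose_mat S = S" "i < 4"
  shows "mv (conj_transpose S) v i = cnj (mv S (\<lambda>l. cnj (v l)) i)"
  unfolding mv_def using assms sym_entry[OF assms(1,2)] by (auto simp: cnj_sum intro!: sum.cong)

lemma bil: assumes "S \<in> carrier_mat 4 4" "transpose_mat S = S"
  shows "(\<Sum>i\<in>{0..<4}. mv S a i * b i) = (\<Sum>i\<in>{0..<4}. a i * mv S b i)"
proof -
  have "(\<Sum>i\<in>{0..<4}. mv S a i * b i) = (\<Sum>i\<in>{0..<4}. \<Sum>l\<in>{0..<4}. S$$(i,l) * a l * b i)"
    unfolding mv_def by (simp add: sum_distrib_right)
  also have "\<dots> = (\<Sum>l\<in>{0..<4}. \<Sum>i\<in>{0..<4}. S$$(i,l) * a l * b i)" by (rule sum.swap)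
  also have "\<dots> = (\<Sum>l\<in>{0..<4}. a l * mv S b l)"
    unfolding mv_def using sym_entry[OF assms] by (auto simp: sum_distrib_left algebra_simps intro!: sum.cong)
  finally show ?thesis .
qed

lemma real_vec_eig: fixes z :: "nat \<Rightarrow> real"
  assumes "\<exists>i<4. z i \<noteq> 0" "\<forall>i<k. z i = 0" "\<forall>i<4. mv S (\<lambda>l. of_real (z l)) i = \<mu> * of_real (z i)"
  shows "\<exists>x::nat\<Rightarrow>real. (x 0)\<^sup>2+(x 1)\<^sup>2+(x 2)\<^sup>2+(x 3)\<^sup>2 = 1 \<and> (\<forall>i<k. x i = 0) \<and>
     (\<forall>i<4. mv S (\<lambda>l. of_real (x l)) i = \<mu> * of_real (x i))"
proof -
  define r where "r = sqrt ((z 0)\<^sup>2+(z 1)\<^sup>2+(z 2)\<^sup>2+(z 3)\<^sup>2)"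
  have rr: "r\<^sup>2 = (z 0)\<^sup>2+(z 1)\<^sup>2+(z 2)\<^sup>2+(z 3)\<^sup>2" unfolding r_def by simp
  have "r \<noteq> 0"
  proof
    assume "r = 0"
    hence "(z 0)\<^sup>2+(z 1)\<^sup>2+(z 2)\<^sup>2+(z 3)\<^sup>2 = 0" using rr by simp
    hence "z 0 = 0 \<and> z 1 = 0 \<and> z 2 = 0 \<and> z 3 = 0" by (simp add: add_nonneg_eq_0_iff)
    thus False using assms(1) by (auto simp: less4)
  qed
  define x where "x = (\<lambda>l. z l / r)"
  have "(x 0)\<^sup>2+(x 1)\<^sup>2+(x 2)\<^sup>2+(x 3)\<^sup>2 = ((z 0)\<^sup>2+(z 1)\<^sup>2+(z 2)\<^sup>2+(z 3)\<^sup>2) / r\<^sup>2"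
    unfolding x_def by (simp add: power_divide add_divide_distrib)
  also have "\<dots> = 1" unfolding rr[symmetric] using \<open>r \<noteq> 0\<close> by simp
  finally have "(x 0)\<^sup>2+(x 1)\<^sup>2+(x 2)\<^sup>2+(x 3)\<^sup>2 = 1" .
  moreover have "\<forall>i<k. x i = 0" unfolding x_def using assms(2) by simp
  moreover have "mv S (\<lambda>l. of_real (x l)) i = \<mu> * of_real (x i)" if "i < 4" for i
  proof -
    have "mv S (\<lambda>l. of_real (x l)) i = mv S (\<lambda>l. (1 / of_real r) * of_real (z l)) i"
      unfolding x_def by (intro mv_cong) simp
    also have "\<dots> = (1 / of_real r) * (\<mu> * of_real (z i))" unfolding mv_scale using assms(3) that by simp
    finally show ?thesis unfolding x_def by simp
  qed
  ultimately show ?thesis by blast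
qed

lemma real_eig:
  assumes S: "S \<in> carrier_mat 4 4" "transpose_mat S = S" "S * conj_transpose S = 1\<^sub>m 4"
    and u: "\<exists>i<4. u i \<noteq> 0" "\<forall>i<k. u i = 0" "\<forall>i<4. mv S u i = \<mu> * u i"
  shows "\<exists>x::nat\<Rightarrow>real. (x 0)\<^sup>2+(x 1)\<^sup>2+(x 2)\<^sup>2+(x 3)\<^sup>2 = 1 \<and> (\<forall>i<k. x i = 0) \<and>
     (\<forall>i<4. mv S (\<lambda>l. of_real (x l)) i = \<mu> * of_real (x i))"
proof -
  have cS: "conj_transpose S * S = 1\<^sub>m 4" using mat_mult_left_right_inverse[OF S(1) _ S(3)] S(1) by simp
  define ub where "ub = (\<lambda>l. cnj (u l))"
  have A: "u i = \<mu> * cnj (mv S ub i)" if i: "i < 4" for i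
  proof -
    have "u i = mv (conj_transpose S * S) u i" using mv_one[OF i] cS by simp
    also have "\<dots> = mv (conj_transpose S) (mv S u) i" using mv_mult[of "conj_transpose S" S i u] S(1) i by simp
    also have "\<dots> = mv (conj_transpose S) (\<lambda>l. \<mu> * u l) i" using u(3) by (intro mv_cong) simp
    also have "\<dots> = \<mu> * mv (conj_transpose S) u i" by (rule mv_scale)
    also have "\<dots> = \<mu> * cnj (mv S ub i)" unfolding mv_ct[OF S(1,2) i] ub_def ..
    finally show ?thesis .
  qed
  have m0: "\<mu> \<noteq> 0"
  proof
    assume "\<mu> = 0"
    hence "u i = 0" if "i < 4" for i using A[OF that] by simp
    thus False using u(1) by blast
  qed
  have B: "mv S ub i = ub i / cnj \<mu>" if i: "i < 4" for i
  proof -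
    have ubi: "ub i = cnj (u i)" by (simp add: ub_def)
    have "ub i = cnj \<mu> * mv S ub i" unfolding ubi using arg_cong[OF A[OF i], of cnj] by simp
    thus ?thesis using m0 by (simp add: field_simps)
  qed
  define Nr where "Nr = (\<Sum>i\<in>{0..<4}. (cmod (u i))\<^sup>2)"
  have Nu: "(\<Sum>i\<in>{0..<4}. u i * ub i) = of_real Nr"
    unfolding Nr_def ub_def of_real_sum by (intro sum.cong refl) (metis complex_norm_square of_real_power)
  have "Nr \<noteq> 0"
  proof -
    obtain j where j: "j < 4" "u j \<noteq> 0" using u(1) by blast
    have "(cmod (u j))\<^sup>2 \<le> Nr" unfolding Nr_def using j by (intro member_le_sum) auto
    moreover have "(cmod (u j))\<^sup>2 > 0" using j by simp
    ultimately show ?thesis by linarith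
  qed
  have "(\<Sum>i\<in>{0..<4}. mv S u i * ub i) = (\<Sum>i\<in>{0..<4}. u i * mv S ub i)" by (rule bil[OF S(1,2)])
  also have "(\<Sum>i\<in>{0..<4}. mv S u i * ub i) = \<mu> * of_real Nr"
    unfolding Nu[symmetric] using u(3) by (simp add: sum_distrib_left mult.assoc)
  also have "(\<Sum>i\<in>{0..<4}. u i * mv S ub i) = of_real Nr / cnj \<mu>"
    unfolding Nu[symmetric] using B by (simp add: sum_divide_distrib)
  finally have "\<mu> * of_real Nr = of_real Nr / cnj \<mu>" .
  hence mm: "1 / cnj \<mu> = \<mu>" using \<open>Nr \<noteq> 0\<close> m0 by (simp add: field_simps)
  have C: "mv S ub i = \<mu> * ub i" if "i < 4" for i
  proof -
    have "ub i / cnj \<mu> = (1 / cnj \<mu>) * ub i" by simp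
    thus ?thesis using B[OF that] mm by simp
  qed
  define xr where "xr = (\<lambda>l. Re (u l))"
  define xi where "xi = (\<lambda>l. Im (u l))"
  have xr: "complex_of_real (xr l) = (1/2) * u l + (1/2) * ub l" for l
    unfolding xr_def ub_def by (simp add: complex_eq_iff)
  have xi: "complex_of_real (xi l) = (-\<i>/2) * u l + (\<i>/2) * ub l" for l
    unfolding xi_def ub_def by (simp add: complex_eq_iff)
  have er: "mv S (\<lambda>l. of_real (xr l)) i = \<mu> * of_real (xr i)" if "i < 4" for i
    unfolding xr mv_lin using u(3) C that by (simp add: algebra_simps)
  have ei: "mv S (\<lambda>l. of_real (xi l)) i = \<mu> * of_real (xi i)" if "i < 4" for i
    unfolding xi mv_lin using u(3) C that by (simp add: algebra_simps)
  show ?thesis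
  proof (cases "\<exists>i<4. xr i \<noteq> 0")
    case True
    thus ?thesis using real_vec_eig[of xr k S \<mu>] er u(2) unfolding xr_def by auto
  next
    case False
    have "\<exists>i<4. xi i \<noteq> 0"
    proof -
      obtain j where j: "j < 4" "u j \<noteq> 0" using u(1) by blast
      hence "xr j = 0" using False by auto
      thus ?thesis using j unfolding xr_def xi_def by (metis complex_eq_iff zero_complex.simps)
    qed
    thus ?thesis using real_vec_eig[of xi k S \<mu>] ei u(2) unfolding xi_def by auto
  qed
qed

lemma idx4: "A \<in> carrier_mat 4 4 \<Longrightarrow> B \<in> carrier_mat 4 4 \<Longrightarrow> i < 4 \<Longrightarrow> j < 4 \<Longrightarrow>
  (A * B) $$ (i,j) = (\<Sum>l\<in>{0..<4}. A$$(i,l) * B$$(l,j))"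
  by (simp add: scalar_prod_def)

lemma ortho_col_e: assumes "ortho Q" "j < 4" "i < 4" "\<forall>l<4. Q$$(l,j) = (if l = j then 1 else 0)"
  shows "Q$$(j,i) = (if i = j then 1 else 0)"
proof -
  have Q: "Q \<in> carrier_mat 4 4" "transpose_mat Q * Q = 1\<^sub>m 4" using assms(1) unfolding ortho_def by auto
  have "(transpose_mat Q * Q)$$(j,i) = (\<Sum>l\<in>{0..<4}. Q$$(l,j) * Q$$(l,i))"
    using idx4[of "transpose_mat Q" Q j i] Q assms by simp
  also have "\<dots> = (\<Sum>l\<in>{0..<4}. if l = j then Q$$(j,i) else 0)" using assms(4) by (intro sum.cong) auto
  also have "\<dots> = Q$$(j,i)" using assms(2) by (simp add: sum.delta)
  finally show ?thesis using Q(2) assms by auto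
qed

lemma defl_a:
  assumes S: "S \<in> carrier_mat 4 4" "transpose_mat S = S" "S * conj_transpose S = 1\<^sub>m 4" and k: "k < 3"
    and D: "\<forall>j<k. \<forall>i<4. i \<noteq> j \<longrightarrow> S$$(i,j) = 0"
  shows "\<exists>Q. goodO Q \<and> (\<forall>j\<le>k. \<forall>i<4. i \<noteq> j \<longrightarrow> (transpose_mat Q * S * Q)$$(i,j) = 0)"
proof -
  obtain \<mu> u where u: "\<exists>i<4. u i \<noteq> 0" "\<forall>i<k. u i = 0" "\<forall>i<4. mv S u i = \<mu> * u i"
    using eig_sub[OF S(1,2) _ D] k by auto
  obtain x where x: "(x 0)\<^sup>2+(x 1)\<^sup>2+(x 2)\<^sup>2+(x 3)\<^sup>2 = 1" "\<forall>i<k. x i = 0"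
    "\<forall>i<4. mv S (\<lambda>l. of_real (x l)) i = \<mu> * of_real (x i)"
    using real_eig[OF S(1-3) u] by blast
  obtain Q where Q: "goodO Q" "\<forall>j<k. \<forall>i<4. Q$$(i,j) = (if i=j then 1 else 0)" "\<forall>i<4. Q$$(i,k) = x i"
    using givens_vec[OF k x(1,2)] by blast
  have Qo: "ortho Q" using Q(1) unfolding goodO_def by auto
  have Qc: "Q \<in> carrier_mat 4 4" "transpose_mat Q * Q = 1\<^sub>m 4" using Qo unfolding ortho_def by auto
  have e: "(transpose_mat Q * S * Q)$$(i,j) = (\<Sum>l\<in>{0..<4}. Q$$(l,i) * (\<Sum>m\<in>{0..<4}. S$$(l,m) * Q$$(m,j)))"
    if "i < 4" "j < 4" for i j
  proof -
    have "transpose_mat Q * S * Q = transpose_mat Q * (S * Q)" using Qc S by (simp add: M4)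
    thus ?thesis using idx4[of "transpose_mat Q" "S * Q" i j] idx4[of S Q] Qc S that by (simp add: mc4)
  qed
  have "(transpose_mat Q * S * Q)$$(i,j) = 0" if ij: "j \<le> k" "i < 4" "i \<noteq> j" for i j
  proof (cases "j < k")
    case True
    have j4: "j < 4" using True k by simp
    have "(\<Sum>m\<in>{0..<4}. S$$(l,m) * Q$$(m,j)) = S$$(l,j)" for l
    proof -
      have "(\<Sum>m\<in>{0..<4}. S$$(l,m) * Q$$(m,j)) = (\<Sum>m\<in>{0..<4}. if m = j then S$$(l,m) else 0)"
        using Q(2) True by (intro sum.cong) auto
      thus ?thesis using j4 by (simp add: sum.delta)
    qed
    hence "(transpose_mat Q * S * Q)$$(i,j) = (\<Sum>l\<in>{0..<4}. Q$$(l,i) * S$$(l,j))" using e[OF ij(2) j4] by simp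
    also have "\<dots> = (\<Sum>l\<in>{0..<4}. if l = j then Q$$(j,i) * S$$(j,j) else 0)"
      using D True by (intro sum.cong) auto
    also have "\<dots> = Q$$(j,i) * S$$(j,j)" using j4 by (simp add: sum.delta)
    also have "Q$$(j,i) = 0" using ortho_col_e[OF Qo j4 ij(2)] Q(2) True ij(3) by auto
    finally show ?thesis by simp
  next
    case False
    hence jk: "j = k" using ij by simp
    have j4: "j < 4" using jk k by simp
    have "(\<Sum>m\<in>{0..<4}. S$$(l,m) * Q$$(m,j)) = \<mu> * Q$$(l,j)" if "l < 4" for l
    proof -
      have "(\<Sum>m\<in>{0..<4}. S$$(l,m) * Q$$(m,j)) = mv S (\<lambda>l. of_real (x l)) l"
        unfolding mv_def using Q(3) jk by (intro sum.cong) auto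
      thus ?thesis using x(3) Q(3) jk that by simp
    qed
    hence "(transpose_mat Q * S * Q)$$(i,j) = \<mu> * (\<Sum>l\<in>{0..<4}. Q$$(l,i) * Q$$(l,j))"
      using e[OF ij(2) j4] by (simp add: sum_distrib_left algebra_simps)
    also have "(\<Sum>l\<in>{0..<4}. Q$$(l,i) * Q$$(l,j)) = (transpose_mat Q * Q)$$(i,j)"
      using idx4[of "transpose_mat Q" Q i j] Qc ij j4 by simp
    also have "\<dots> = 0" using Qc ij j4 by simp
    finally show ?thesis by simp
  qed
  thus ?thesis using Q(1) by blast
qed

lemma sum04: "(\<Sum>l\<in>{0..<4::nat}. f l) = f 0 + f 1 + f 2 + f 3"
  by (simp add: numeral_eq_Suc sum.atLeast0_lessThan_Suc)

lemma defl_b: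
  assumes W: "ortho W" and k: "k < 3" and D: "\<forall>j<k. \<forall>i<4. W$$(i,j) = (if i=j then 1 else 0)"
  shows "\<exists>Q. goodO Q \<and> (\<forall>j\<le>k. \<forall>i<4. (transpose_mat Q * W)$$(i,j) = (if i=j then 1 else 0))"
proof -
  have Wc: "W \<in> carrier_mat 4 4" "transpose_mat W * W = 1\<^sub>m 4" "conj_transpose W = transpose_mat W"
    using W unfolding ortho_def by auto
  have k4: "k < 4" using k by simp
  define x where "x = (\<lambda>l. Re (W$$(l,k)))"
  have re: "W$$(l,k) = of_real (x l)" if "l < 4" for l
  proof -
    have "conj_transpose W $$ (k,l) = transpose_mat W $$ (k,l)" using Wc(3) by simp
    hence "cnj (W$$(l,k)) = W$$(l,k)" using Wc(1) that k4 by simp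
    thus ?thesis unfolding x_def by (metis Reals_cnj_iff complex_is_Real_iff of_real_Re)
  qed
  have "(transpose_mat W * W)$$(k,k) = (\<Sum>l\<in>{0..<4}. W$$(l,k) * W$$(l,k))"
    using idx4[of "transpose_mat W" W k k] Wc k4 by simp
  hence "(\<Sum>l\<in>{0..<4}. W$$(l,k) * W$$(l,k)) = 1" using Wc k4 by simp
  hence "complex_of_real ((x 0)\<^sup>2+(x 1)\<^sup>2+(x 2)\<^sup>2+(x 3)\<^sup>2) = 1"
    unfolding sum04 using re by (simp add: power2_eq_square)
  hence x1: "(x 0)\<^sup>2+(x 1)\<^sup>2+(x 2)\<^sup>2+(x 3)\<^sup>2 = 1" by (metis of_real_eq_1_iff)
  have x2: "\<forall>i<k. x i = 0"
  proof (intro allI impI)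
    fix i assume i: "i < k"
    have i4: "i < 4" using i k by simp
    have "(transpose_mat W * W)$$(i,k) = (\<Sum>l\<in>{0..<4}. W$$(l,i) * W$$(l,k))"
      using idx4[of "transpose_mat W" W i k] Wc k4 i4 by simp
    also have "\<dots> = (\<Sum>l\<in>{0..<4}. if l = i then W$$(i,k) else 0)" using D i by (intro sum.cong) auto
    also have "\<dots> = W$$(i,k)" using i4 by (simp add: sum.delta)
    finally have "W$$(i,k) = 0" using Wc i k4 by simp
    thus "x i = 0" unfolding x_def by simp
  qed
  obtain Q where Q: "goodO Q" "\<forall>j<k. \<forall>i<4. Q$$(i,j) = (if i=j then 1 else 0)" "\<forall>i<4. Q$$(i,k) = x i"
    using givens_vec[OF k x1 x2] by blast
  have Qo: "ortho Q" using Q(1) unfolding goodO_def by auto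
  have Qc: "Q \<in> carrier_mat 4 4" "transpose_mat Q * Q = 1\<^sub>m 4" using Qo unfolding ortho_def by auto
  have "(transpose_mat Q * W)$$(i,j) = (if i=j then 1 else 0)" if ij: "j \<le> k" "i < 4" for i j
  proof -
    have j4: "j < 4" using ij k by simp
    have e: "(transpose_mat Q * W)$$(i,j) = (\<Sum>l\<in>{0..<4}. Q$$(l,i) * W$$(l,j))"
      using idx4[of "transpose_mat Q" W i j] Qc Wc ij j4 by simp
    show ?thesis
    proof (cases "j < k")
      case True
      have "(\<Sum>l\<in>{0..<4}. Q$$(l,i) * W$$(l,j)) = (\<Sum>l\<in>{0..<4}. if l = j then Q$$(j,i) else 0)"
        using D True by (intro sum.cong) auto
      also have "\<dots> = Q$$(j,i)" using j4 by (simp add: sum.delta)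
      also have "\<dots> = (if i = j then 1 else 0)" using ortho_col_e[OF Qo j4 ij(2)] Q(2) True by auto
      finally show ?thesis using e by simp
    next
      case False
      hence jk: "j = k" using ij by simp
      have "(\<Sum>l\<in>{0..<4}. Q$$(l,i) * W$$(l,j)) = (\<Sum>l\<in>{0..<4}. Q$$(l,i) * Q$$(l,j))"
        using re Q(3) jk by (intro sum.cong) auto
      also have "\<dots> = (transpose_mat Q * Q)$$(i,j)" using idx4[of "transpose_mat Q" Q i j] Qc ij j4 by simp
      also have "\<dots> = (if i = j then 1 else 0)" using Qc ij j4 by simp
      finally show ?thesis using e by simp
    qed
  qed
  thus ?thesis using Q(1) by blast
qed

lemma pres_a: assumes "ortho Q" "S \<in> carrier_mat 4 4" "transpose_mat S = S" "S * conj_transpose S = 1\<^sub>m 4"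
  shows "transpose_mat (transpose_mat Q * S * Q) = transpose_mat Q * S * Q"
    "(transpose_mat Q * S * Q) * conj_transpose (transpose_mat Q * S * Q) = 1\<^sub>m 4"
proof -
  have Q: "Q \<in> carrier_mat 4 4" "transpose_mat Q * Q = 1\<^sub>m 4" "conj_transpose Q = transpose_mat Q"
    "Q * transpose_mat Q = 1\<^sub>m 4" using assms(1) ortho_right unfolding ortho_def by auto
  have ctt: "conj_transpose (transpose_mat Q) = Q" using Q(3) by (simp add: ct_transpose)
  show "transpose_mat (transpose_mat Q * S * Q) = transpose_mat Q * S * Q" using Q assms(2,3) by (simp add: M4)
  show "(transpose_mat Q * S * Q) * conj_transpose (transpose_mat Q * S * Q) = 1\<^sub>m 4"
    using Q assms(2,4) ctt by (simp add: M4)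
qed

lemma diag_a: assumes "S \<in> carrier_mat 4 4" "transpose_mat S = S" "S * conj_transpose S = 1\<^sub>m 4"
  shows "\<exists>Q. goodO Q \<and> (\<forall>i<4. \<forall>j<4. i \<noteq> j \<longrightarrow> (transpose_mat Q * S * Q)$$(i,j) = 0)"
proof -
  obtain Q0 where Q0: "goodO Q0" "\<forall>j\<le>0. \<forall>i<4. i \<noteq> j \<longrightarrow> (transpose_mat Q0 * S * Q0)$$(i,j) = 0"
    using defl_a[OF assms, of 0] by auto
  define S1 where "S1 = transpose_mat Q0 * S * Q0"
  have o0: "ortho Q0" using Q0 unfolding goodO_def by auto
  have S1: "S1 \<in> carrier_mat 4 4" "transpose_mat S1 = S1" "S1 * conj_transpose S1 = 1\<^sub>m 4"
    using pres_a[OF o0 assms] o0 assms(1) unfolding S1_def ortho_def by (auto simp: M4)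
  obtain Q1 where Q1: "goodO Q1" "\<forall>j\<le>1. \<forall>i<4. i \<noteq> j \<longrightarrow> (transpose_mat Q1 * S1 * Q1)$$(i,j) = 0"
    using defl_a[OF S1, of 1] Q0(2) unfolding S1_def[symmetric] by auto
  define S2 where "S2 = transpose_mat Q1 * S1 * Q1"
  have o1: "ortho Q1" using Q1 unfolding goodO_def by auto
  have S2: "S2 \<in> carrier_mat 4 4" "transpose_mat S2 = S2" "S2 * conj_transpose S2 = 1\<^sub>m 4"
    using pres_a[OF o1 S1] o1 S1(1) unfolding S2_def ortho_def by (auto simp: M4)
  obtain Q2 where Q2: "goodO Q2" "\<forall>j\<le>2. \<forall>i<4. i \<noteq> j \<longrightarrow> (transpose_mat Q2 * S2 * Q2)$$(i,j) = 0"
    using defl_a[OF S2, of 2] Q1(2) unfolding S2_def[symmetric] by (auto simp: less_Suc_eq)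
  define S3 where "S3 = transpose_mat Q2 * S2 * Q2"
  have o2: "ortho Q2" using Q2 unfolding goodO_def by auto
  have S3: "S3 \<in> carrier_mat 4 4" "transpose_mat S3 = S3"
    using pres_a[OF o2 S2] o2 S2(1) unfolding S3_def ortho_def by (auto simp: M4)
  have D3: "S3$$(i,j) = 0" if "i < 4" "j < 4" "i \<noteq> j" for i j
  proof (cases "j \<le> 2")
    case True thus ?thesis using Q2(2) that unfolding S3_def by auto
  next
    case False
    hence "j = 3" "i \<le> 2" using that by auto
    hence "S3$$(i,j) = S3$$(j,i)" using sym_entry[OF S3] that by auto
    also have "\<dots> = 0" using Q2(2) that \<open>i \<le> 2\<close> unfolding S3_def by auto
    finally show ?thesis .
  qed
  define Q where "Q = Q0 * Q1 * Q2"
  have "goodO Q" unfolding Q_def using Q0(1) Q1(1) Q2(1) by (intro goodO_mult)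
  moreover have "transpose_mat Q * S * Q = S3" unfolding Q_def S3_def S2_def S1_def
    using o0 o1 o2 assms(1) unfolding ortho_def by (simp add: M4)
  ultimately show ?thesis using D3 by auto
qed

lemma diag_b: assumes "ortho W"
  shows "\<exists>Q. goodO Q \<and> (\<forall>i<4. \<forall>j<4. i \<noteq> j \<longrightarrow> (transpose_mat Q * W)$$(i,j) = 0)"
proof -
  obtain Q0 where Q0: "goodO Q0" "\<forall>j\<le>0. \<forall>i<4. (transpose_mat Q0 * W)$$(i,j) = (if i=j then 1 else 0)"
    using defl_b[OF assms, of 0] by auto
  define W1 where "W1 = transpose_mat Q0 * W"
  have o0: "ortho Q0" using Q0 unfolding goodO_def by auto
  have W1: "ortho W1" unfolding W1_def by (intro ortho_mult ortho_transpose o0 assms)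
  obtain Q1 where Q1: "goodO Q1" "\<forall>j\<le>1. \<forall>i<4. (transpose_mat Q1 * W1)$$(i,j) = (if i=j then 1 else 0)"
    using defl_b[OF W1, of 1] Q0(2) unfolding W1_def[symmetric] by auto
  define W2 where "W2 = transpose_mat Q1 * W1"
  have o1: "ortho Q1" using Q1 unfolding goodO_def by auto
  have W2: "ortho W2" unfolding W2_def by (intro ortho_mult ortho_transpose o1 W1)
  obtain Q2 where Q2: "goodO Q2" "\<forall>j\<le>2. \<forall>i<4. (transpose_mat Q2 * W2)$$(i,j) = (if i=j then 1 else 0)"
    using defl_b[OF W2, of 2] Q1(2) unfolding W2_def[symmetric] by (auto simp: less_Suc_eq)
  define W3 where "W3 = transpose_mat Q2 * W2"
  have o2: "ortho Q2" using Q2 unfolding goodO_def by auto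
  have W3: "ortho W3" unfolding W3_def by (intro ortho_mult ortho_transpose o2 W2)
  have D3: "W3$$(i,j) = 0" if "i < 4" "j < 4" "i \<noteq> j" for i j
  proof (cases "j \<le> 2")
    case True thus ?thesis using Q2(2) that unfolding W3_def by auto
  next
    case False
    hence "j = 3" "i \<le> 2" using that by auto
    have "\<forall>l<4. W3$$(l,i) = (if l = i then 1 else 0)" using Q2(2) \<open>i \<le> 2\<close> unfolding W3_def by auto
    from ortho_col_e[OF W3 _ _ this, of j] show ?thesis using that by auto
  qed
  define Q where "Q = Q0 * Q1 * Q2"
  have "goodO Q" unfolding Q_def using Q0(1) Q1(1) Q2(1) by (intro goodO_mult)
  moreover have "transpose_mat Q * W = W3" unfolding Q_def W3_def W2_def W1_def
    using o0 o1 o2 assms unfolding ortho_def by (simp add: M4)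
  ultimately show ?thesis using D3 by auto
qed

lemma diag_unit: assumes "D \<in> carrier_mat 4 4" "\<forall>i<4. \<forall>j<4. i \<noteq> j \<longrightarrow> D$$(i,j) = 0"
    "D * conj_transpose D = 1\<^sub>m 4"
  shows "D = Dg (D$$(0,0)) (D$$(1,1)) (D$$(2,2)) (D$$(3,3))" "\<forall>i<4. cmod (D$$(i,i)) = 1"
proof -
  show De: "D = Dg (D$$(0,0)) (D$$(1,1)) (D$$(2,2)) (D$$(3,3))"
    unfolding Dg_def using m4_expand[OF assms(1)] assms(2) by (simp add: all4)
  show "\<forall>i<4. cmod (D$$(i,i)) = 1"
  proof (intro allI impI)
    fix i :: nat assume i: "i < 4"
    have "(D * conj_transpose D)$$(i,i) = (\<Sum>l\<in>{0..<4}. D$$(i,l) * cnj (D$$(i,l)))"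
      using idx4[of D "conj_transpose D" i i] assms(1) i by simp
    also have "\<dots> = (\<Sum>l\<in>{0..<4}. if l = i then D$$(i,i) * cnj (D$$(i,i)) else 0)"
      using assms(2) i by (intro sum.cong) auto
    also have "\<dots> = D$$(i,i) * cnj (D$$(i,i))" using i by (simp add: sum.delta)
    finally have "D$$(i,i) * cnj (D$$(i,i)) = 1" using assms(3) i by simp
    hence "complex_of_real ((cmod (D$$(i,i)))\<^sup>2) = 1" by (simp only: complex_norm_square)
    hence "(cmod (D$$(i,i)))\<^sup>2 = 1" by (metis of_real_eq_1_iff)
    thus "cmod (D$$(i,i)) = 1" using norm_ge_zero[of "D$$(i,i)"] by (auto simp: power2_eq_1_iff)
  qed
qed

lemma Ccirc_carrier[simp]: "Ccirc a b c \<in> carrier_mat 4 4"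
  unfolding Ccirc_diag by (simp add: M4)

lemma Dg_mult: "Dg a0 a1 a2 a3 * Dg b0 b1 b2 b3 = Dg (a0*b0) (a1*b1) (a2*b2) (a3*b3)"
  unfolding Dg_def m4_mult by simp
lemma Dg_ct: "conj_transpose (Dg a0 a1 a2 a3) = Dg (cnj a0) (cnj a1) (cnj a2) (cnj a3)"
  unfolding Dg_def m4_ct by simp
lemma Dg_tr: "transpose_mat (Dg a0 a1 a2 a3) = Dg a0 a1 a2 a3"
  unfolding Dg_def m4_tr by simp
lemma Dg_one: "Dg 1 1 1 1 = 1\<^sub>m 4"
  unfolding Dg_def m4_one by simp

lemma unit_cnj: "cmod z = 1 \<Longrightarrow> cnj z * z = 1" "cmod z = 1 \<Longrightarrow> z * cnj z = 1"
proof -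
  assume "cmod z = 1"
  hence "z * cnj z = 1" using complex_norm_square[of z] by simp
  thus "cnj z * z = 1" "z * cnj z = 1" by (simp_all add: mult.commute)
qed

theorem theorem1:
  fixes U :: "complex mat"
  assumes "unitary4 U"
  shows "\<exists>c gs. cmod c = 1 \<and> set gs \<subseteq> elementary_gates \<and> length gs \<le> 23
           \<and> length (filter (\<lambda>g. g \<in> cnot_gates) gs) \<le> 4
           \<and> U = c \<cdot>\<^sub>m circuit_matrix gs"
proof -
  have U: "U \<in> carrier_mat 4 4" "U * conj_transpose U = 1\<^sub>m 4" using assms unfolding unitary4_def by auto
  have Mc: "conj_transpose Mg \<in> carrier_mat 4 4" by simp
  define V where "V = conj_transpose Mg * U * Mg"
  have Vc: "V \<in> carrier_mat 4 4" unfolding V_def using U by (simp add: M4)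
  have V1: "V * conj_transpose V = 1\<^sub>m 4" unfolding V_def using U Mg_unit by (simp add: M4)
  have V2: "conj_transpose V * V = 1\<^sub>m 4" using mat_mult_left_right_inverse[OF Vc _ V1] Vc by simp
  define S where "S = transpose_mat V * V"
  have Sc: "S \<in> carrier_mat 4 4" unfolding S_def using Vc by (simp add: M4)
  have S1: "transpose_mat S = S" unfolding S_def using Vc by (simp add: M4)
  have tt: "transpose_mat V * transpose_mat (conj_transpose V) = 1\<^sub>m 4"
    using tm4[of "conj_transpose V" V] Vc V2 by simp
  have S2: "S * conj_transpose S = 1\<^sub>m 4" unfolding S_def using Vc V1 tt by (simp add: M4 ct_transpose)
  obtain Q where Q: "goodO Q" "\<forall>i<4. \<forall>j<4. i \<noteq> j \<longrightarrow> (transpose_mat Q * S * Q)$$(i,j) = 0"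
    using diag_a[OF Sc S1 S2] by blast
  have Qo: "ortho Q" using Q(1) unfolding goodO_def by auto
  have Qc: "Q \<in> carrier_mat 4 4" "transpose_mat Q * Q = 1\<^sub>m 4" "conj_transpose Q = transpose_mat Q"
    "Q * transpose_mat Q = 1\<^sub>m 4" using Qo ortho_right unfolding ortho_def by auto
  define S3 where "S3 = transpose_mat Q * S * Q"
  have S3c: "S3 \<in> carrier_mat 4 4" unfolding S3_def using Qc Sc by (simp add: M4)
  have S3u: "S3 * conj_transpose S3 = 1\<^sub>m 4" unfolding S3_def using pres_a[OF Qo Sc S1 S2] by simp
  have S3d: "S3 = Dg (S3$$(0,0)) (S3$$(1,1)) (S3$$(2,2)) (S3$$(3,3))" "\<forall>i<4. cmod (S3$$(i,i)) = 1"
    using diag_unit[OF S3c _ S3u] Q(2) unfolding S3_def by auto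
  define f where "f = (\<lambda>i. csqrt (S3$$(i,i)))"
  have fu: "cmod (f i) = 1" if "i < 4" for i unfolding f_def using S3d(2) that by simp
  have ff: "f i * f i = S3$$(i,i)" for i unfolding f_def using power2_csqrt by (simp add: power2_eq_square)
  define F where "F = Dg (f 0) (f 1) (f 2) (f 3)"
  define Fc where "Fc = Dg (cnj (f 0)) (cnj (f 1)) (cnj (f 2)) (cnj (f 3))"
  have Fcar: "F \<in> carrier_mat 4 4" "Fc \<in> carrier_mat 4 4" unfolding F_def Fc_def by auto
  have FF: "Fc * F = 1\<^sub>m 4" "F * Fc = 1\<^sub>m 4" unfolding F_def Fc_def Dg_mult Dg_one[symmetric]
    using unit_cnj fu by auto
  have Fct: "conj_transpose Fc = F" "transpose_mat Fc = Fc" unfolding F_def Fc_def Dg_ct Dg_tr by simp_all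
  define W where "W = V * Q * Fc"
  have Wc: "W \<in> carrier_mat 4 4" unfolding W_def using Vc Qc Fcar by (simp add: M4)
  have "transpose_mat W * W = Fc * (S3 * Fc)" unfolding W_def S3_def S_def using Vc Qc Fcar Fct by (simp add: M4)
  also have "\<dots> = 1\<^sub>m 4"
  proof -
    have e: "cnj (f i) * (S3$$(i,i) * cnj (f i)) = 1" if "i < 4" for i
      unfolding ff[symmetric] using unit_cnj[OF fu[OF that]] by (simp add: algebra_simps)
    show ?thesis apply (subst S3d(1)) unfolding Fc_def Dg_mult Dg_one[symmetric] using e by simp
  qed
  finally have WtW: "transpose_mat W * W = 1\<^sub>m 4" .
  have WcW: "W * conj_transpose W = 1\<^sub>m 4" unfolding W_def using Vc Qc Fcar Fct FF V1 by (simp add: M4)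
  have Wct: "conj_transpose W = transpose_mat W"
  proof -
    have "conj_transpose W = transpose_mat W * W * conj_transpose W" using WtW Wc by (simp add: l14)
    also have "\<dots> = transpose_mat W" using Wc WcW by (simp add: a4 r14)
    finally show ?thesis .
  qed
  have Wo: "ortho W" unfolding ortho_def using Wc WtW Wct by simp
  obtain Q2 where Q2: "goodO Q2" "\<forall>i<4. \<forall>j<4. i \<noteq> j \<longrightarrow> (transpose_mat Q2 * W)$$(i,j) = 0"
    using diag_b[OF Wo] by blast
  have Q2o: "ortho Q2" using Q2(1) unfolding goodO_def by auto
  have Q2c: "Q2 \<in> carrier_mat 4 4" "Q2 * transpose_mat Q2 = 1\<^sub>m 4" using Q2o ortho_right unfolding ortho_def by auto
  define E where "E = transpose_mat Q2 * W"
  have Eo: "ortho E" unfolding E_def by (intro ortho_mult ortho_transpose Q2o Wo)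
  have Ec: "E \<in> carrier_mat 4 4" "E * conj_transpose E = 1\<^sub>m 4"
    using Eo ortho_right[OF Eo] unfolding ortho_def by auto
  have Ed: "E = Dg (E$$(0,0)) (E$$(1,1)) (E$$(2,2)) (E$$(3,3))" "\<forall>i<4. cmod (E$$(i,i)) = 1"
    using diag_unit[OF Ec(1) _ Ec(2)] Q2(2) unfolding E_def by auto
  have WE: "W = Q2 * E" unfolding E_def using Q2c Wc by (simp add: M4)
  have VW: "V = W * F * transpose_mat Q" unfolding W_def using Vc Qc Fcar FF by (simp add: M4)
  define G where "G = Dg (E$$(0,0) * f 0) (E$$(1,1) * f 1) (E$$(2,2) * f 2) (E$$(3,3) * f 3)"
  have EF: "E * F = G" unfolding G_def F_def by (subst Ed(1)) (simp add: Dg_mult)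
  have Gc: "G \<in> carrier_mat 4 4" unfolding G_def by simp
  have V3: "V = Q2 * (G * transpose_mat Q)" unfolding VW WE EF[symmetric] using Q2c Ec Fcar Qc by (simp add: M4)
  have "U = Mg * V * conj_transpose Mg" unfolding V_def using U Mg_unit by (simp add: M4)
  also have "\<dots> = (Mg * Q2 * conj_transpose Mg) * ((Mg * G * conj_transpose Mg) * (Mg * transpose_mat Q * conj_transpose Mg))"
    unfolding V3 using Mg_unit Q2c Gc Qc by (simp add: M4)
  finally have U3: "U = (Mg * Q2 * conj_transpose Mg) * ((Mg * G * conj_transpose Mg) * (Mg * transpose_mat Q * conj_transpose Mg))" .
  obtain A1 B1 where AB1: "unitary2 A1" "unitary2 B1" "Mg * Q2 * conj_transpose Mg = kron2 A1 B1"
    using Q2(1) unfolding goodO_def by blast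
  obtain A2 B2 where AB2: "unitary2 A2" "unitary2 B2" "Mg * transpose_mat Q * conj_transpose Mg = kron2 A2 B2"
    using goodO_transpose[OF Q(1)] unfolding goodO_def by blast
  have gu: "cmod (E$$(i,i) * f i) = 1" if "i < 4" for i using Ed(2) fu that by (simp add: norm_mult)
  obtain c a b e where cabe: "cmod c = 1" "Mg * G * conj_transpose Mg = c \<cdot>\<^sub>m Ccirc a b e"
    using core_decomp[of "E$$(0,0) * f 0" "E$$(1,1) * f 1" "E$$(2,2) * f 2" "E$$(3,3) * f 3"] gu
    unfolding G_def by auto
  have U4: "U = c \<cdot>\<^sub>m (kron2 A1 B1 * (Ccirc a b e * kron2 A2 B2))"
    unfolding U3 AB1(3) AB2(3) cabe(2) by (simp add: M4)
  obtain gs1 where g1: "realizes (kron2 A1 B1) gs1" "length gs1 = 6" "nocnot gs1" using loc[OF AB1(1,2)] by blast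
  obtain gs2 where g2: "realizes (kron2 A2 B2) gs2" "length gs2 = 6" "nocnot gs2" using loc[OF AB2(1,2)] by blast
  obtain gsC where gC: "realizes (Ccirc a b e) gsC" "length gsC = 9" "length (filter (\<lambda>g. g \<in> cnot_gates) gsC) \<le> 4"
    using core_real by blast
  have "realizes U ((gs2 @ gsC) @ gs1)" unfolding U4
    by (intro realizes_phase cabe(1) realizes_append g1(1) g2(1) gC(1))
  then obtain c' where c': "set ((gs2 @ gsC) @ gs1) \<subseteq> elementary_gates" "cmod c' = 1"
    "U = c' \<cdot>\<^sub>m circuit_matrix ((gs2 @ gsC) @ gs1)" unfolding realizes_def by blast
  have f1: "filter (\<lambda>g. g \<in> cnot_gates) gs1 = []" "filter (\<lambda>g. g \<in> cnot_gates) gs2 = []"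
    using g1(3) g2(3) unfolding nocnot_def by (auto simp: filter_empty_conv)
  have "length (filter (\<lambda>g. g \<in> cnot_gates) ((gs2 @ gsC) @ gs1)) \<le> 4" using f1 gC(3) by simp
  moreover have "length ((gs2 @ gsC) @ gs1) \<le> 23" using g1 g2 gC by simp
  ultimately show ?thesis using c' by blast
qed

end
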